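(* Let $\boldsymbol\pi=(\boldsymbol\pi_s)_{s\in\mathbb N}$ be a sequence of coordinatewise permutations ($\boldsymbol\pi_s(\mathbf m)=(\pi^1_s(m^1),\dots,\pi^d_s(m^d))$ with $\pi^j_s$ permutations of $\{0,\dots,2^{m_s}-1\}$), let $F^{\boldsymbol\pi}$ be as in the context, and let $G\subset\mathbb G^d$ be open with $G\cap F^{\boldsymbol\pi}\neq\emptyset$. Then $G\cap F^{\boldsymbol\pi}$ is an $M$-set for the $d$-dimensional Walsh system with respect to convergence by rectangles, by cubes, and repeated convergence for every order of iterated summation. Moreover there is a dyadic cube $\Delta^{(m_{s_0})}\subset G$ (of rank $m_{s_0}$ for some $s_0$) such that the $d$-fold Walsh series generating the quasimeasure $\tau_{F^{\boldsymbol\pi}}|_{\Delta^{(m_{s_0})}}$ realizes the $M$-set $G\cap F^{\boldsymbol\pi}$.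
   Context: Fix an integer $d\ge 2$. $\mathbb G$ is the dyadic group: sequences $g=(g_k)_{k\ge0}$, $g_k\in\{0,1\}$, coordinatewise addition mod 2, product topology (basis: dyadic cubes); $\mathbb G^d$ its $d$-th power. For $n\in\mathbb N_0$, $n=\sum_kn_k2^k$, $n_k\in\{0,1\}$. Dyadic interval of rank $k$: $\Delta^{(k)}_m=\{g: g_t=m_{k-1-t},\ 0\le t<k\}$; dyadic cube $\Delta^{(k)}_{\mathbf m}=\prod_l\Delta^{(k)}_{m^l}$. Vector order coordinatewise, $\mathbf 1=(1,\dots,1)$. Walsh functions $W_n(g)=\prod_k(-1)^{g_kn_k}$, $W_{\mathbf n}(\mathbf g)=\prod_lW_{n^l}(g^l)$; $W^{(k)}_{\mathbf n\mathbf m}$ is the constant value of $W_{\mathbf n}$ on $\Delta^{(k)}_{\mathbf m}$ ($\mathbf n,\mathbf m<2^k\mathbf 1$); $R_{k\mathbf 1}:=W_{2^k\mathbf 1}$. Partial sums $S_{\mathbf N}=\sum_{\mathbf n<\mathbf N}a_{\mathbf n}W_{\mathbf n}$; convergence by rectangles: $S_{\mathbf N}(\mathbf g)\to S$ as $\min_jN^j\to\infty$; by cubes: $S_{N\mathbf 1}(\mathbf g)\to S$; repeated: the iterated sum $\sum_{n^{j_1}}(\cdots\sum_{n^{j_d}}a_{\mathbf n}W_{\mathbf n}(\mathbf g))$ converges to $S$ for the permutation $(j_1,\dots,j_d)$. $A$ is an $M$-set if some series with not all coefficients zero converges to $0$ at every point outside $A$; such a series realizes $A$. Quasimeasure: $\tau$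 on dyadic cubes with $\tau(\Delta^{(k)}_{\mathbf m})=\sum_{\boldsymbol\sigma\in\{0,1\}^d}\tau(\Delta^{(k+1)}_{2\mathbf m+\boldsymbol\sigma})$; its generating series is $\sum\widehat\tau_{\mathbf n}W_{\mathbf n}$ with $\widehat\tau_{\mathbf n}=\sum_{\mathbf m<2^k\mathbf 1}W^{(k)}_{\mathbf n\mathbf m}\tau(\Delta^{(k)}_{\mathbf m})$ ($\mathbf n<2^k\mathbf 1$). For nonempty closed $E$, $\tau_E$ is the unique nonnegative quasimeasure with $\tau_E(\mathbb G^d)=1$, $\tau_E(\Delta)=0$ iff $\Delta\cap E=\emptyset$, which splits the value of a cube meeting $E$ equally among its $2^d$ children meeting $E$. The restriction to a dyadic cube $\widetilde\Delta$ is $\tau|_{\widetilde\Delta}(\Delta)=\tau(\widetilde\Delta\cap\Delta)$ (with value $0$ on $\emptyset$). Let $m_1=0$, $m_{s+1}=2(2m_s+1)$; $F^{\boldsymbol\pi}_s=\bigcup_{\mathbf m,\mathbf m'<2^{m_s}\mathbf 1}\{\mathbf g\in\Delta^{(2m_s)}_{2^{m_s}\mathbf m+\mathbf m'}: R_{2m_s\mathbf 1}(\mathbf g)=W^{(m_s)}_{\boldsymbol\pi_s(\mathbf m)\,\mathbf m'}\}$, $F^{\boldsymbol\pi}=\bigcap_sF^{\boldsymbol\pi}_s$. *)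

theory Defs
  imports Complex_Main
begin

text \<open>Points of the dyadic group G are 0/1-sequences, encoded as nat => bool
  (True = 1).  Points of G^d are 'd => nat => bool for a finite index type 'd
  with CARD('d) = d.  Multi-indices are 'd => nat.\<close>

type_synonym 'd pt = "'d \<Rightarrow> nat \<Rightarrow> bool"
type_synonym 'd idx = "'d \<Rightarrow> nat"

definition dint :: "nat \<Rightarrow> nat \<Rightarrow> (nat \<Rightarrow> bool) set" where
  "dint k m = {g. \<forall>t<k. g t = bit m (k - 1 - t)}"

definition dcube :: "nat \<Rightarrow> 'd idx \<Rightarrow> 'd pt set" where
  "dcube k m = {g. \<forall>l. g l \<in> dint k (m l)}"

definition idx_below :: "nat \<Rightarrow> 'd idx set" where
  "idx_below k = {m. \<forall>l. m l < 2 ^ k}"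

text \<open>Open sets of G^d: the product topology, generated by the dyadic cubes.\<close>
definition open_dyadic :: "'d pt set \<Rightarrow> bool" where
  "open_dyadic U \<longleftrightarrow> (\<forall>g\<in>U. \<exists>k m. m \<in> idx_below k \<and> g \<in> dcube k m \<and> dcube k m \<subseteq> U)"

definition walsh :: "nat \<Rightarrow> (nat \<Rightarrow> bool) \<Rightarrow> real" where
  "walsh n g = (\<Prod>k\<in>{k. bit n k}. if g k then -1 else 1)"

definition walshv :: "'d::finite idx \<Rightarrow> 'd pt \<Rightarrow> real" where
  "walshv n g = (\<Prod>l\<in>UNIV. walsh (n l) (g l))"

definition cube_pt :: "nat \<Rightarrow> 'd idx \<Rightarrow> 'd pt" where
  "cube_pt k m = (\<lambda>l t. t < k \<and> bit (m l) (k - 1 - t))"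

text \<open>W^{(k)}_{n m}: the (constant) value of W_n on Delta^{(k)}_m.\<close>
definition walsh_const :: "nat \<Rightarrow> 'd::finite idx \<Rightarrow> 'd idx \<Rightarrow> real" where
  "walsh_const k n m = walshv n (cube_pt k m)"

definition rad :: "nat \<Rightarrow> 'd::finite pt \<Rightarrow> real" where
  "rad k g = walshv (\<lambda>_. 2 ^ k) g"

definition psum :: "('d::finite idx \<Rightarrow> real) \<Rightarrow> 'd idx \<Rightarrow> 'd pt \<Rightarrow> real" where
  "psum a N g = (\<Sum>n\<in>{n. \<forall>l. n l < N l}. a n * walshv n g)"

definition conv_rect :: "('d::finite idx \<Rightarrow> real) \<Rightarrow> 'd pt \<Rightarrow> real \<Rightarrow> bool" where
  "conv_rect a g S \<longleftrightarrow>
     (\<forall>\<epsilon>>0. \<exists>K. \<forall>N. (\<forall>l. K \<le> N l) \<longrightarrow> \<bar>psum a N g - S\<bar> < \<epsilon>)"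

definition conv_cube :: "('d::finite idx \<Rightarrow> real) \<Rightarrow> 'd pt \<Rightarrow> real \<Rightarrow> bool" where
  "conv_cube a g S \<longleftrightarrow> (\<lambda>N. psum a (\<lambda>_. N) g) \<longlonglongrightarrow> S"

text \<open>Iterated summation: the first coordinate in the list is the outermost sum.
  Each step fixes one coordinate; when all coordinates are fixed the summand is
  constant.\<close>
fun iter_sum :: "'d list \<Rightarrow> ('d idx \<Rightarrow> real) \<Rightarrow> real \<Rightarrow> bool" where
  "iter_sum [] f S \<longleftrightarrow> S = f (\<lambda>_. 0)"
| "iter_sum (j # js) f S \<longleftrightarrow>
     (\<exists>T. (\<forall>k. iter_sum js (\<lambda>n. f (n(j := k))) (T k)) \<and> T sums S)"

definition conv_rep :: "'d list \<Rightarrow> ('d::finite idx \<Rightarrow> real) \<Rightarrow> 'd pt \<Rightarrow> real \<Rightarrow> bool" where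
  "conv_rep js a g S \<longleftrightarrow> iter_sum js (\<lambda>n. a n * walshv n g) S"

definition realizes ::
  "(('d idx \<Rightarrow> real) \<Rightarrow> 'd pt \<Rightarrow> real \<Rightarrow> bool) \<Rightarrow> ('d idx \<Rightarrow> real) \<Rightarrow> 'd pt set \<Rightarrow> bool" where
  "realizes conv a A \<longleftrightarrow> (\<exists>n. a n \<noteq> 0) \<and> (\<forall>g. g \<notin> A \<longrightarrow> conv a g 0)"

definition M_set ::
  "(('d idx \<Rightarrow> real) \<Rightarrow> 'd pt \<Rightarrow> real \<Rightarrow> bool) \<Rightarrow> 'd pt set \<Rightarrow> bool" where
  "M_set conv A \<longleftrightarrow> (\<exists>a. realizes conv a A)"

text \<open>Quasimeasures are functions of (rank k, index m) giving tau(Delta^{(k)}_m).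
  tau_E: value 1 on the whole space, 0 on cubes missing E, and the value of a
  cube meeting E is split equally among its children meeting E.\<close>
definition parent :: "'d idx \<Rightarrow> 'd idx" where
  "parent m = (\<lambda>l. m l div 2)"

definition children :: "'d idx \<Rightarrow> 'd idx set" where
  "children p = {(\<lambda>l. 2 * p l + \<sigma> l) | \<sigma>. \<forall>l. \<sigma> l < 2}"

fun tauE :: "'d pt set \<Rightarrow> nat \<Rightarrow> 'd idx \<Rightarrow> real" where
  "tauE E 0 m = (if dcube 0 m \<inter> E = {} then 0 else 1)"
| "tauE E (Suc k) m =
     (if dcube (Suc k) m \<inter> E = {} then 0
      else tauE E k (parent m) /
             card {c \<in> children (parent m). dcube (Suc k) c \<inter> E \<noteq> {}})"

text \<open>Restriction tau|_{Delta^{(k0)}_{m0}}(Delta) = tau(Delta^{(k0)}_{m0} \<inter> Delta),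
  0 when the intersection is empty (a nonempty intersection of dyadic cubes is
  the one of larger rank).\<close>
definition qm_restrict ::
  "(nat \<Rightarrow> 'd idx \<Rightarrow> real) \<Rightarrow> nat \<Rightarrow> 'd idx \<Rightarrow> nat \<Rightarrow> 'd idx \<Rightarrow> real" where
  "qm_restrict \<tau> k0 m0 k m =
     (if dcube k0 m0 \<inter> dcube k m = {} then 0
      else if k0 \<le> k then \<tau> k m else \<tau> k0 m0)"

definition qm_coeff :: "(nat \<Rightarrow> 'd::finite idx \<Rightarrow> real) \<Rightarrow> 'd idx \<Rightarrow> real" where
  "qm_coeff \<tau> n =
     (let k = (LEAST k. n \<in> idx_below k)
      in \<Sum>m\<in>idx_below k. walsh_const k n m * \<tau> k m)"

text \<open>m_1 = 0, m_{s+1} = 2(2 m_s + 1) (indices s \<ge> 1; the value at 0 is a dummy).\<close>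
fun m_seq :: "nat \<Rightarrow> nat" where
  "m_seq 0 = 0"
| "m_seq (Suc 0) = 0"
| "m_seq (Suc (Suc s)) = 2 * (2 * m_seq (Suc s) + 1)"

text \<open>pi s l is the permutation pi^l_s; pi_s(m) = (pi^l_s(m^l))_l.\<close>
definition F_s :: "(nat \<Rightarrow> 'd \<Rightarrow> nat \<Rightarrow> nat) \<Rightarrow> nat \<Rightarrow> 'd::finite pt set" where
  "F_s \<pi> s = (\<Union>m\<in>idx_below (m_seq s). \<Union>m'\<in>idx_below (m_seq s).
      {g \<in> dcube (2 * m_seq s) (\<lambda>l. 2 ^ m_seq s * m l + m' l).
         rad (2 * m_seq s) g = walsh_const (m_seq s) (\<lambda>l. \<pi> s l (m l)) m'})"

definition F_pi :: "(nat \<Rightarrow> 'd \<Rightarrow> nat \<Rightarrow> nat) \<Rightarrow> 'd::finite pt set" where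
  "F_pi \<pi> = (\<Inter>s\<in>{1..}. F_s \<pi> s)"

end

theory Submission
  imports Defs "HOL-Library.FuncSet"
begin

unbundle bit_operations_syntax


lemma sum_lessThan_add: "(\<Sum>i<m+(n::nat). f i) = (\<Sum>i<m. f i) + (\<Sum>i<n. f (m+i))"
  by (induction n) (auto simp: ac_simps)

lemma bit_le_nat: "bit (n::nat) k \<Longrightarrow> 2^k \<le> n"
proof (rule ccontr)
  assume "bit n k" "\<not> 2^k \<le> n"
  then have "n div 2^k = 0" by simp
  with \<open>bit n k\<close> show False by (simp add: bit_iff_odd)
qed

lemma bit_lt_nat: "bit (n::nat) k \<Longrightarrow> k < n"
  using bit_le_nat[of n k] less_exp[of k] by linarith

lemma finite_bits: "finite {k. bit (n::nat) k}"
  by (rule finite_subset[of _ "{..<n}"]) (auto dest: bit_lt_nat)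

lemma bit_small: "(n::nat) < 2^M \<Longrightarrow> bit n k \<Longrightarrow> k < M"
proof -
  assume a: "n < 2^M" "bit n k"
  then have "2^k < (2::nat)^M" using bit_le_nat[of n k] by linarith
  then show "k < M" by simp
qed

lemma big_has_bit: "2^M \<le> (n::nat) \<Longrightarrow> \<exists>k\<ge>M. bit n k"
proof -
  assume "2^M \<le> n"
  then have "drop_bit M n \<noteq> 0" by (simp add: drop_bit_eq_div div_greater_zero_iff)
  then have "\<exists>j. bit (drop_bit M n) j" using bit_eq_iff[of "drop_bit M n" 0] by auto
  then obtain j where "bit (drop_bit M n) j" by blast
  then show ?thesis by (auto simp: bit_drop_bit_eq intro!: exI[of _ "M+j"])
qed

definition sg :: "bool \<Rightarrow> real" where "sg b = (if b then -1 else 1)"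

lemma sg_sq[simp]: "sg b * sg b = 1" by (simp add: sg_def)

lemma walsh_def2: "walsh n x = (\<Prod>k\<in>{k. bit n k}. sg (x k))"
  by (simp add: walsh_def sg_def)

lemma walsh_pm: "walsh n x = 1 \<or> walsh n x = -1"
proof -
  have "\<And>A. finite A \<Longrightarrow> (\<Prod>k\<in>A. sg (x k)) = 1 \<or> (\<Prod>k\<in>A. sg (x k)) = -1"
  proof -
    fix A :: "nat set" assume "finite A"
    then show "(\<Prod>k\<in>A. sg (x k)) = 1 \<or> (\<Prod>k\<in>A. sg (x k)) = -1"
      by (induction A rule: finite_induct) (auto simp: sg_def)
  qed
  then show ?thesis using finite_bits by (simp add: walsh_def2)
qed

lemma walsh_abs[simp]: "\<bar>walsh n x\<bar> = 1"
  using walsh_pm[of n x] by auto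

lemma walsh_sq[simp]: "walsh n x * walsh n x = 1"
  using walsh_pm[of n x] by auto

lemma walsh_0[simp]: "walsh 0 x = 1"
  by (simp add: walsh_def)

lemma walsh_cong: "(\<And>k. bit n k \<Longrightarrow> x k = y k) \<Longrightarrow> walsh n x = walsh n y"
  by (simp add: walsh_def)

lemma walsh_xor: "walsh (a XOR b) x = walsh a x * walsh b x"
proof -
  let ?f = "\<lambda>k. sg (x k)"
  define A where "A = {k. bit a k}"
  define B where "B = {k. bit b k}"
  have fA: "finite A" and fB: "finite B" using finite_bits A_def B_def by auto
  have X: "{k. bit (a XOR b) k} = (A - B) \<union> (B - A)"
    by (auto simp: A_def B_def bit_xor_iff)
  have e1: "A - A \<inter> B = A - B" "B - A \<inter> B = B - A" by blast+
  have pA: "prod ?f A = prod ?f (A - B) * prod ?f (A \<inter> B)"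
    using prod.subset_diff[of "A \<inter> B" A ?f] fA e1 by simp
  have pB: "prod ?f B = prod ?f (B - A) * prod ?f (A \<inter> B)"
    using prod.subset_diff[of "A \<inter> B" B ?f] fB e1 by simp
  have sq: "prod ?f (A \<inter> B) * prod ?f (A \<inter> B) = 1"
    by (simp add: prod.distrib[symmetric])
  have "prod ?f ((A - B) \<union> (B - A)) = prod ?f (A - B) * prod ?f (B - A)"
    using fA fB by (intro prod.union_disjoint) auto
  moreover have "prod ?f A * prod ?f B = (prod ?f (A - B) * prod ?f (B - A)) * (prod ?f (A \<inter> B) * prod ?f (A \<inter> B))"
    unfolding pA pB by (simp add: ac_simps)
  ultimately show ?thesis
    unfolding walsh_def2 X A_def[symmetric] B_def[symmetric] using sq by simp
qed

lemma walsh_add_disj: "(a::nat) AND b = 0 \<Longrightarrow> walsh (a + b) x = walsh a x * walsh b x"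
  by (simp add: disjunctive_add_eq_xor walsh_xor)

lemma bit_mult_pow: "bit (2^M * (p::nat)) k \<longleftrightarrow> M \<le> k \<and> bit p (k - M)"
proof -
  have "2^M * p = push_bit M p" by (simp add: push_bit_eq_mult)
  then show ?thesis by (simp add: bit_push_bit_iff_nat)
qed

lemma and_small_big: "(r::nat) < 2^M \<Longrightarrow> (2^M * p) AND r = 0"
  by (rule bit_eqI) (auto simp: bit_and_iff bit_mult_pow dest: bit_small)

lemma walsh_split: "(r::nat) < 2^M \<Longrightarrow> walsh (2^M * p + r) x = walsh (2^M * p) x * walsh r x"
  by (simp add: walsh_add_disj and_small_big)

lemma walsh_xorp: "walsh n (\<lambda>t. x t \<noteq> y t) = walsh n x * walsh n y"
proof -
  have "sg (x k \<noteq> y k) = sg (x k) * sg (y k)" for k by (auto simp: sg_def)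
  then show ?thesis by (simp add: walsh_def2 prod.distrib)
qed

lemma walsh_flip_gen:
  assumes yq: "y q = (\<not> x q)" and yk: "\<And>k. k \<noteq> q \<Longrightarrow> y k = x k"
  shows "walsh n y = (if bit n q then -1 else 1) * walsh n x"
proof (cases "bit n q")
  case True
  have f: "finite {k. bit n k}" by (rule finite_bits)
  have e1: "walsh n y = sg (y q) * (\<Prod>k\<in>{k. bit n k} - {q}. sg (y k))"
    unfolding walsh_def2 using True f by (subst prod.remove[of _ q]) auto
  have e3: "(\<Prod>k\<in>{k. bit n k} - {q}. sg (y k)) = (\<Prod>k\<in>{k. bit n k} - {q}. sg (x k))"
    by (rule prod.cong) (auto simp: yk)
  have e2: "walsh n x = sg (x q) * (\<Prod>k\<in>{k. bit n k} - {q}. sg (x k))"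
    unfolding walsh_def2 using True f by (subst prod.remove[of _ q]) auto
  have "sg (y q) = - sg (x q)" using yq by (simp add: sg_def)
  then show ?thesis using True e1 e2 e3 by simp
next
  case False
  have "walsh n y = walsh n x"
    by (rule walsh_cong, rule yk) (use False in auto)
  then show ?thesis using False by simp
qed

lemma walsh_flip: "walsh n (x(q := \<not> x q)) = (if bit n q then -1 else 1) * walsh n x"
  by (rule walsh_flip_gen) auto

lemma walsh_pow2: "walsh (2^q) x = sg (x q)"
  by (simp add: walsh_def2 bit_exp_iff)

lemma walsh_shift: "walsh (2^M * p) x = walsh p (\<lambda>t. x (M + t))"
proof -
  have "{k. bit (2^M * p) k} = (\<lambda>t. M + t) ` {k. bit p k}"
    by (auto simp: bit_mult_pow image_iff) (metis le_add_diff_inverse)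
  then show ?thesis unfolding walsh_def2 by (simp add: prod.reindex)
qed


fun blk :: "(nat \<Rightarrow> bool) \<Rightarrow> nat \<Rightarrow> nat \<Rightarrow> nat" where
  "blk x a 0 = 0"
| "blk x a (Suc b) = 2 * blk x a b + of_bool (x (a + b))"

lemma bit_blk: "bit (blk x a b) i \<longleftrightarrow> i < b \<and> x (a + b - 1 - i)"
proof (induction b arbitrary: i)
  case 0 then show ?case by simp
next
  case (Suc b)
  show ?case
  proof (cases i)
    case 0 then show ?thesis by (simp add: bit_0)
  next
    case (Suc j)
    have "(2 * blk x a b + of_bool (x (a + b))) div 2 = blk x a b" by simp
    then show ?thesis using Suc.IH[of j] Suc by (simp add: bit_Suc)
  qed
qed

lemma blk_less: "blk x a b < 2^b"
  by (induction b) auto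

lemma blk_cong: "(\<And>t. t < b \<Longrightarrow> x (a+t) = y (a+t)) \<Longrightarrow> blk x a b = blk y a b"
  by (induction b) auto

lemma blk_append: "blk x a (b + c) = 2^c * blk x a b + blk x (a+b) c"
  by (induction c) (auto simp: algebra_simps)

definition pt1 :: "nat \<Rightarrow> nat \<Rightarrow> (nat \<Rightarrow> bool)" where
  "pt1 M \<mu> = (\<lambda>t. t < M \<and> bit \<mu> (M - 1 - t))"

lemma cube_pt_eq: "cube_pt k m = (\<lambda>l. pt1 k (m l))"
  by (simp add: cube_pt_def pt1_def)

lemma blk_eq_iff: "\<mu> < 2^M \<Longrightarrow> blk x 0 M = \<mu> \<longleftrightarrow> (\<forall>t<M. x t = bit \<mu> (M - 1 - t))"
proof
  assume m: "\<mu> < 2^M" and b: "blk x 0 M = \<mu>"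
  show "\<forall>t<M. x t = bit \<mu> (M - 1 - t)"
  proof (intro allI impI)
    fix t assume "t < M"
    then have "bit (blk x 0 M) (M - 1 - t) = x t" by (simp add: bit_blk)
    then show "x t = bit \<mu> (M - 1 - t)" using b by simp
  qed
next
  assume m: "\<mu> < 2^M" and h: "\<forall>t<M. x t = bit \<mu> (M - 1 - t)"
  show "blk x 0 M = \<mu>"
  proof (rule bit_eqI)
    fix i
    show "bit (blk x 0 M) i = bit \<mu> i"
    proof (cases "i < M")
      case True
      then have "x (M - 1 - i) = bit \<mu> i" using h[rule_format, of "M - 1 - i"] by simp
      then show ?thesis using True by (simp add: bit_blk)
    next
      case False
      then show ?thesis using bit_small[OF m, of i] by (auto simp add: bit_blk)
    qed
  qed
qed

lemma dint_iff: "\<mu> < 2^M \<Longrightarrow> x \<in> dint M \<mu> \<longleftrightarrow> blk x 0 M = \<mu>"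
  by (simp add: dint_def blk_eq_iff)

lemma blk_pt1: "\<mu> < 2^M \<Longrightarrow> blk (pt1 M \<mu>) 0 M = \<mu>"
  by (simp add: blk_eq_iff pt1_def)

lemma pt1_dint: "pt1 M \<mu> \<in> dint M \<mu>"
  by (simp add: dint_def pt1_def)

lemma blk_agree_pt1: "blk x 0 M = \<mu> \<Longrightarrow> t < M \<Longrightarrow> x t = pt1 M \<mu> t"
  using blk_eq_iff[of \<mu> M x] blk_less[of x 0 M] by (simp add: pt1_def)

definition P1 :: "nat \<Rightarrow> (nat \<Rightarrow> bool) set" where
  "P1 K = {x. \<forall>t\<ge>K. \<not> x t}"

lemma pt1_P1: "pt1 K \<mu> \<in> P1 K" by (simp add: pt1_def P1_def)

lemma pt1_blk: "x \<in> P1 K \<Longrightarrow> pt1 K (blk x 0 K) = x"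
proof (rule ext)
  fix t assume x: "x \<in> P1 K"
  show "pt1 K (blk x 0 K) t = x t"
  proof (cases "t < K")
    case True then show ?thesis by (simp add: pt1_def bit_blk)
  next
    case False then show ?thesis using x by (simp add: pt1_def P1_def)
  qed
qed

lemma P1_bij: "bij_betw (pt1 K) {..<2^K} (P1 K)"
proof (rule bij_betw_byWitness[where f' = "\<lambda>x. blk x 0 K"])
  show "\<forall>a\<in>{..<2 ^ K}. blk (pt1 K a) 0 K = a" by (simp add: blk_pt1)
  show "\<forall>a'\<in>P1 K. pt1 K (blk a' 0 K) = a'" by (simp add: pt1_blk)
  show "pt1 K ` {..<2 ^ K} \<subseteq> P1 K" by (auto simp: pt1_P1)
  show "(\<lambda>x. blk x 0 K) ` P1 K \<subseteq> {..<2 ^ K}" by (auto simp: blk_less)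
qed

lemma card_P1: "card (P1 K) = 2^K"
  using bij_betw_same_card[OF P1_bij[of K]] by simp

lemma finite_P1[simp]: "finite (P1 K)"
  using card_P1[of K] by (metis card_eq_0_iff power_not_zero zero_neq_numeral)

lemma sum_invol_zero:
  fixes f :: "'a \<Rightarrow> real"
  assumes "\<And>j. j \<in> A \<Longrightarrow> \<sigma> j \<in> A" "\<And>j. j \<in> A \<Longrightarrow> \<sigma> (\<sigma> j) = j"
    "\<And>j. j \<in> A \<Longrightarrow> f (\<sigma> j) = - f j"
  shows "sum f A = 0"
proof -
  have "sum f A = sum (\<lambda>j. - f j) A"
    by (rule sum.reindex_bij_witness[of _ \<sigma> \<sigma>]) (use assms in auto)
  then show ?thesis by (simp add: sum_negf)
qed

definition D :: "nat \<Rightarrow> (nat \<Rightarrow> bool) \<Rightarrow> real" where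
  "D r x = (\<Sum>j<r. walsh j x)"

lemma D_le: "\<bar>D r x\<bar> \<le> r"
proof -
  have "\<bar>D r x\<bar> \<le> (\<Sum>j<r. \<bar>walsh j x\<bar>)" unfolding D_def by (rule sum_abs)
  then show ?thesis by simp
qed

lemma D_0[simp]: "D 0 x = 0" by (simp add: D_def)

lemma D_pow: "D (2^M) x = (if \<forall>t<M. \<not> x t then 2^M else 0)"
proof (induction M)
  case 0 then show ?case by (simp add: D_def)
next
  case (Suc M)
  have "D (2^Suc M) x = D (2^M) x + (\<Sum>j<2^M. walsh (2^M + j) x)"
    unfolding D_def by (simp add: mult_2 sum_lessThan_add)
  also have "(\<Sum>j<2^M. walsh (2^M + j) x) = (\<Sum>j<(2::nat)^M. sg (x M) * walsh j x)"
  proof (rule sum.cong)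
    fix j assume "j \<in> {..<(2::nat)^M}"
    then show "walsh (2^M + j) x = sg (x M) * walsh j x"
      using walsh_split[of j M 1 x] by (simp add: walsh_pow2)
  qed simp
  also have "\<dots> = sg (x M) * D (2^M) x" by (simp add: D_def sum_distrib_left)
  finally have "D (2^Suc M) x = (1 + sg (x M)) * D (2^M) x" by (simp add: algebra_simps)
  then show ?case using Suc.IH by (auto simp: sg_def less_Suc_eq)
qed

lemma xor_pow_div: "((j::nat) XOR 2^q) div 2^(Suc q) = j div 2^(Suc q)"
proof -
  have "drop_bit (Suc q) (j XOR 2^q) = drop_bit (Suc q) j"
    by (rule bit_eqI) (auto simp: bit_drop_bit_eq bit_xor_iff bit_exp_iff)
  then show ?thesis by (simp add: drop_bit_eq_div)
qed

lemma D_bound: assumes xq: "x q" shows "\<bar>D r x\<bar> \<le> 2^(Suc q)"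
proof -
  define Q :: nat where "Q = 2^Suc q"
  define c where "c = r div Q"
  define e where "e = r mod Q"
  have r: "r = Q * c + e" by (simp add: c_def e_def)
  have eQ: "e < Q" unfolding e_def Q_def by simp
  have z: "(\<Sum>j<Q*c. walsh j x) = 0"
  proof (rule sum_invol_zero[where \<sigma> = "\<lambda>j. j XOR 2^q"])
    fix j assume j: "j \<in> {..<Q*c}"
    have "(j XOR 2^q) div Q = j div Q" unfolding Q_def by (rule xor_pow_div)
    moreover have "j div Q < c" using j by (simp add: Q_def div_less_iff_less_mult mult.commute)
    ultimately have "(j XOR 2^q) div Q < c" by simp
    then show "j XOR 2^q \<in> {..<Q*c}"
      by (simp add: Q_def div_less_iff_less_mult mult.commute)
    show "(j XOR 2 ^ q) XOR 2 ^ q = j" by (simp add: xor.assoc)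
    show "walsh (j XOR 2^q) x = - walsh j x"
      by (simp add: walsh_xor walsh_pow2 xq sg_def)
  qed
  have "D r x = (\<Sum>j<Q*c. walsh j x) + (\<Sum>i<e. walsh (Q*c + i) x)"
    unfolding D_def r by (rule sum_lessThan_add)
  also have "\<dots> = (\<Sum>i<e. walsh (Q*c + i) x)" using z by simp
  finally have "\<bar>D r x\<bar> \<le> (\<Sum>i<e. \<bar>walsh (Q*c + i) x\<bar>)" using sum_abs by (metis)
  also have "\<dots> = e" by simp
  finally have "\<bar>D r x\<bar> \<le> real e" .
  moreover have "real e \<le> 2^Suc q" using eQ unfolding Q_def
    by (metis less_imp_le of_nat_le_iff of_nat_numeral of_nat_power)
  ultimately show ?thesis by linarith
qed


definition dep1 :: "((nat \<Rightarrow> bool) \<Rightarrow> real) \<Rightarrow> nat \<Rightarrow> bool" where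
  "dep1 f K \<longleftrightarrow> (\<forall>x y. (\<forall>t<K. x t = y t) \<longrightarrow> f x = f y)"

lemma dep1_mono: "dep1 f K \<Longrightarrow> K \<le> K' \<Longrightarrow> dep1 f K'"
  unfolding dep1_def by auto

lemma P1_Suc: "P1 (Suc n) = P1 n \<union> (\<lambda>x. x(n := True)) ` P1 n"
proof (intro equalityI subsetI)
  fix x assume x: "x \<in> P1 (Suc n)"
  show "x \<in> P1 n \<union> (\<lambda>x. x(n := True)) ` P1 n"
  proof (cases "x n")
    case True
    have "x(n := False) \<in> P1 n" unfolding P1_def
    proof (clarify)
      fix t assume "n \<le> t" "(x(n := False)) t"
      then show False using x by (cases "t = n") (auto simp: P1_def)
    qed
    moreover have "x = (x(n := False))(n := True)" using True by (simp add: fun_eq_iff)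
    ultimately show ?thesis by blast
  next
    case False
    have "x \<in> P1 n" unfolding P1_def
    proof (clarify)
      fix t assume "n \<le> t" "x t"
      then show False using x False by (cases "t = n") (auto simp: P1_def)
    qed
    then show ?thesis by blast
  qed
qed (auto simp: P1_def)

lemma P1_step: assumes "dep1 f n" shows "sum f (P1 (Suc n)) = 2 * sum f (P1 n)"
proof -
  have disj: "P1 n \<inter> (\<lambda>x. x(n := True)) ` P1 n = {}" by (auto simp: P1_def)
  have inj: "inj_on (\<lambda>x. x(n := True)) (P1 n)"
  proof (rule inj_onI)
    fix x y assume "x \<in> P1 n" "y \<in> P1 n" "x(n := True) = y(n := True)"
    then show "x = y" by (auto simp: P1_def fun_eq_iff split: if_splits)
  qed
  have "sum f (P1 (Suc n)) = sum f (P1 n) + sum f ((\<lambda>x. x(n := True)) ` P1 n)"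
    unfolding P1_Suc by (rule sum.union_disjoint) (use disj in auto)
  also have "sum f ((\<lambda>x. x(n := True)) ` P1 n) = sum (\<lambda>x. f (x(n := True))) (P1 n)"
    using inj by (simp add: sum.reindex)
  also have "\<dots> = sum f (P1 n)"
    by (rule sum.cong) (use assms in \<open>auto simp: dep1_def\<close>)
  finally show ?thesis by simp
qed

lemma P1_mono: "dep1 f K \<Longrightarrow> sum f (P1 (K + j)) = 2^j * sum f (P1 K)"
proof (induction j)
  case 0 then show ?case by simp
next
  case (Suc j)
  have "dep1 f (K + j)" using Suc.prems dep1_mono by fastforce
  then show ?case using P1_step[of f "K + j"] Suc by simp
qed

definition Ex1 :: "nat \<Rightarrow> ((nat \<Rightarrow> bool) \<Rightarrow> real) \<Rightarrow> real" where
  "Ex1 K f = sum f (P1 K) / 2^K"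

lemma Ex1_mono: "dep1 f K \<Longrightarrow> K \<le> K' \<Longrightarrow> Ex1 K' f = Ex1 K f"
proof -
  assume d: "dep1 f K" and k: "K \<le> K'"
  then obtain j where j: "K' = K + j" using le_Suc_ex by blast
  show ?thesis unfolding Ex1_def j P1_mono[OF d] by (simp add: power_add)
qed

lemma P1_point: fixes f :: "(nat \<Rightarrow> bool) \<Rightarrow> real" assumes "\<mu> < 2^M"
  shows "sum (\<lambda>x. of_bool (blk x 0 M = \<mu>) * f x) (P1 M) = f (pt1 M \<mu>)"
proof -
  have "sum (\<lambda>x. of_bool (blk x 0 M = \<mu>) * f x) (P1 M) = sum (\<lambda>x. if x = pt1 M \<mu> then f x else 0) (P1 M)"
  proof (rule sum.cong)
    fix x assume x: "x \<in> P1 M"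
    have "blk x 0 M = \<mu> \<longleftrightarrow> x = pt1 M \<mu>"
      using pt1_blk[OF x] blk_pt1[OF assms] by auto
    then show "of_bool (blk x 0 M = \<mu>) * f x = (if x = pt1 M \<mu> then f x else 0)"
      by (cases "x = pt1 M \<mu>") auto
  qed simp
  also have "\<dots> = f (pt1 M \<mu>)" by (simp add: sum.delta' pt1_P1)
  finally show ?thesis .
qed

lemma P1_flip_zero:
  fixes f :: "(nat \<Rightarrow> bool) \<Rightarrow> real"
  assumes q: "q < K" and h: "\<And>x. x \<in> P1 K \<Longrightarrow> f (x(q := \<not> x q)) = - f x"
  shows "sum f (P1 K) = 0"
proof (rule sum_invol_zero[where \<sigma> = "\<lambda>x. x(q := \<not> x q)"])
  fix x assume x: "x \<in> P1 K"
  show "x(q := \<not> x q) \<in> P1 K" using x q by (auto simp: P1_def)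
  show "(x(q := \<not> x q))(q := \<not> (x(q := \<not> x q)) q) = x" by auto
  show "f (x(q := \<not> x q)) = - f x" by (rule h[OF x])
qed

lemma bit_div_pow: "bit ((j::nat) div 2^M) b = bit j (M + b)"
  by (simp add: drop_bit_eq_div[symmetric] bit_drop_bit_eq)

lemma walsh_dep1: "n < 2^K \<Longrightarrow> dep1 (walsh n) K"
  unfolding dep1_def by (auto intro!: walsh_cong dest: bit_small)

definition ee :: "nat \<Rightarrow> nat \<Rightarrow> nat \<Rightarrow> nat \<Rightarrow> nat \<Rightarrow> real" where
  "ee K M \<mu> p j = Ex1 K (\<lambda>x. walsh j x * of_bool (blk x 0 M = \<mu>) * walsh (2^M*p) x)"

lemma ee_eq:
  assumes MK: "M \<le> K" and mu: "\<mu> < 2^M" and j: "j < 2^K" and p: "p < 2^(K-M)"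
  shows "ee K M \<mu> p j = (if j div 2^M = p then walsh (j mod 2^M) (pt1 M \<mu>) / 2^M else 0)"
proof (cases "j div 2^M = p")
  case False
  define q where "q = j div 2^M"
  have KM: "(2::nat)^K = 2^M * 2^(K-M)" using MK by (simp add: power_add[symmetric])
  have qlt: "q < 2^(K-M)" using j unfolding q_def KM by (simp add: div_less_iff_less_mult mult.commute)
  obtain b where b: "bit q b \<noteq> bit p b" using False bit_eq_iff unfolding q_def by blast
  have bK: "b < K - M" using b bit_small[OF qlt, of b] bit_small[OF p, of b] by auto
  have "sum (\<lambda>x. walsh j x * of_bool (blk x 0 M = \<mu>) * walsh (2^M*p) x) (P1 K) = 0"
  proof (rule P1_flip_zero[where q = "M + b"])
    show "M + b < K" using bK by simp
    fix x :: "nat \<Rightarrow> bool"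
    have bl: "blk (x(M + b := \<not> x (M + b))) 0 M = blk x 0 M" by (rule blk_cong) auto
    have "bit j (M + b) = bit q b" unfolding q_def by (simp add: bit_div_pow)
    moreover have "bit (2^M * p) (M + b) = bit p b" by (simp add: bit_mult_pow)
    ultimately show "walsh j (x(M + b := \<not> x (M + b))) * of_bool (blk (x(M + b := \<not> x (M + b))) 0 M = \<mu>) *
          walsh (2 ^ M * p) (x(M + b := \<not> x (M + b))) =
         - (walsh j x * of_bool (blk x 0 M = \<mu>) * walsh (2 ^ M * p) x)"
      using b by (simp add: walsh_flip bl)
  qed
  then show ?thesis using False by (simp add: ee_def Ex1_def)
next
  case True
  define r where "r = j mod 2^M"
  have "j = j div 2^M * 2^M + j mod 2^M" by (rule div_mult_mod_eq[symmetric])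
  then have jr: "j = 2^M * p + r" using True unfolding r_def by (simp add: mult.commute)
  have rM: "r < 2^M" unfolding r_def by simp
  have f: "(\<lambda>x. walsh j x * of_bool (blk x 0 M = \<mu>) * walsh (2^M*p) x)
         = (\<lambda>x. of_bool (blk x 0 M = \<mu>) * walsh r x)"
  proof
    fix x
    have "walsh j x = walsh (2^M*p) x * walsh r x" unfolding jr by (rule walsh_split[OF rM])
    then show "walsh j x * of_bool (blk x 0 M = \<mu>) * walsh (2^M*p) x = of_bool (blk x 0 M = \<mu>) * walsh r x"
      by (metis (no_types, lifting) mult.assoc mult.commute mult.left_commute mult_1 walsh_sq)
  qed
  have d: "dep1 (\<lambda>x. of_bool (blk x 0 M = \<mu>) * walsh r x) M"
    using walsh_dep1[OF rM] unfolding dep1_def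
    by (metis (no_types, lifting) add_0 blk_cong)
  have "ee K M \<mu> p j = Ex1 M (\<lambda>x. of_bool (blk x 0 M = \<mu>) * walsh r x)"
    unfolding ee_def f by (rule Ex1_mono[OF d MK])
  also have "\<dots> = walsh r (pt1 M \<mu>) / 2^M" unfolding Ex1_def using P1_point[OF mu] by simp
  finally show ?thesis using True r_def by simp
qed

lemma ee_sum:
  assumes MK: "M \<le> K" and mu: "\<mu> < 2^M" and R: "R \<le> 2^K" and p: "p < 2^(K-M)"
  shows "(\<Sum>j<R. ee K M \<mu> p j * walsh j y)
       = walsh (2^M*p) y * D (min (R - 2^M*p) (2^M)) (\<lambda>t. y t \<noteq> pt1 M \<mu> t) / 2^M"
proof -
  define \<rho> where "\<rho> = min (R - 2^M*p) (2^M)"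
  have "(\<Sum>j<R. ee K M \<mu> p j * walsh j y)
      = (\<Sum>j<R. if j div 2^M = p then walsh (j mod 2^M) (pt1 M \<mu>) / 2^M * walsh j y else 0)"
    by (rule sum.cong) (use R in \<open>auto simp: ee_eq[OF MK mu _ p]\<close>)
  also have "\<dots> = (\<Sum>j\<in>{j\<in>{..<R}. j div 2^M = p}. walsh (j mod 2^M) (pt1 M \<mu>) / 2^M * walsh j y)"
    by (rule sum.inter_filter[symmetric]) simp
  also have "{j\<in>{..<R}. j div 2^M = p} = (\<lambda>r. 2^M*p + r) ` {..<\<rho>}"
  proof (intro equalityI subsetI)
    fix j assume "j \<in> {j\<in>{..<R}. j div 2^M = p}"
    then have j: "j < R" "j div 2^M = p" by auto
    have "j = 2^M * p + j mod 2^M" using j(2) by (metis div_mult_mod_eq mult.commute)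
    moreover have "j mod 2^M < \<rho>" unfolding \<rho>_def using j calculation by auto
    ultimately show "j \<in> (\<lambda>r. 2^M*p + r) ` {..<\<rho>}" by blast
  next
    fix j assume "j \<in> (\<lambda>r. 2^M*p + r) ` {..<\<rho>}"
    then obtain r where r: "r < \<rho>" "j = 2^M*p + r" by auto
    then have "r < 2^M" "2^M*p + r < R" unfolding \<rho>_def by auto
    then show "j \<in> {j\<in>{..<R}. j div 2^M = p}" using r by auto
  qed
  also have "(\<Sum>j\<in>(\<lambda>r. 2^M*p + r) ` {..<\<rho>}. walsh (j mod 2^M) (pt1 M \<mu>) / 2^M * walsh j y)
      = (\<Sum>r<\<rho>. walsh ((2^M*p + r) mod 2^M) (pt1 M \<mu>) / 2^M * walsh (2^M*p + r) y)"
    by (subst sum.reindex) (auto simp: inj_on_def)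
  also have "\<dots> = (\<Sum>r<\<rho>. walsh (2^M*p) y * walsh r (\<lambda>t. y t \<noteq> pt1 M \<mu> t) / 2^M)"
  proof (rule sum.cong)
    fix r assume "r \<in> {..<\<rho>}"
    then have rM: "r < 2^M" unfolding \<rho>_def by auto
    have x: "walsh r (\<lambda>t. y t \<noteq> pt1 M \<mu> t) = walsh r y * walsh r (pt1 M \<mu>)" by (rule walsh_xorp)
    have m: "(2^M*p + r) mod 2^M = r" using rM by simp
    show "walsh ((2^M*p + r) mod 2^M) (pt1 M \<mu>) / 2^M * walsh (2^M*p + r) y
        = walsh (2^M*p) y * walsh r (\<lambda>t. y t \<noteq> pt1 M \<mu> t) / 2^M"
      unfolding x m walsh_split[OF rM] by simp
  qed simp
  also have "\<dots> = walsh (2^M*p) y * D \<rho> (\<lambda>t. y t \<noteq> pt1 M \<mu> t) / 2^M"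
    by (simp add: D_def sum_distrib_left sum_divide_distrib)
  finally show ?thesis unfolding \<rho>_def .
qed


definition PK :: "nat \<Rightarrow> 'd pt set" where
  "PK K = {h. \<forall>l. h l \<in> P1 K}"

lemma PK_PiE: "PK K = PiE UNIV (\<lambda>_. P1 K)"
  by (simp add: PK_def PiE_UNIV_domain Pi_def)

lemma idx_below_PiE: "idx_below K = PiE UNIV (\<lambda>_. {..<(2::nat)^K})"
  by (simp add: idx_below_def PiE_UNIV_domain Pi_def)

lemma finite_PK[simp]: "finite (PK K :: 'd::finite pt set)"
  unfolding PK_PiE by (rule finite_PiE) auto

lemma finite_idx_below[simp]: "finite (idx_below K :: 'd::finite idx set)"
  unfolding idx_below_PiE by (rule finite_PiE) auto

lemma card_PK: "card (PK K :: 'd::finite pt set) = 2^(K * card (UNIV::'d set))"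
  unfolding PK_PiE by (simp add: card_PiE card_P1 power_mult)

lemma card_idx_below: "card (idx_below K :: 'd::finite idx set) = 2^(K * card (UNIV::'d set))"
  unfolding idx_below_PiE by (simp add: card_PiE power_mult)

lemma sum_PK_prod:
  "(\<Sum>h\<in>PK K. \<Prod>l\<in>UNIV. f l (h l)) = (\<Prod>l\<in>(UNIV::'d::finite set). \<Sum>x\<in>P1 K. f l x :: real)"
  unfolding PK_PiE by (rule prod_sum_PiE[symmetric]) auto

lemma sum_box_prod:
  fixes N :: "'d::finite \<Rightarrow> nat"
  shows "(\<Sum>n\<in>{n. \<forall>l. n l < N l}. \<Prod>l\<in>UNIV. f l (n l)) = (\<Prod>l\<in>(UNIV::'d::finite set). \<Sum>j<N l. f l j :: real)"
proof -
  have e: "{n. \<forall>l. n l < N l} = PiE UNIV (\<lambda>l. {..<N l})" by (simp add: PiE_UNIV_domain Pi_def)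
  show ?thesis unfolding e by (rule prod_sum_PiE[symmetric]) auto
qed

lemma sum_idx_prod:
  "(\<Sum>m\<in>idx_below K. \<Prod>l\<in>UNIV. f l (m l)) = (\<Prod>l\<in>(UNIV::'d::finite set). \<Sum>\<mu><2^K. f l \<mu> :: real)"
  unfolding idx_below_PiE by (simp add: prod_sum_PiE)

lemma cube_pt_bij: "bij_betw (cube_pt K) (idx_below K :: 'd idx set) (PK K)"
proof (rule bij_betw_byWitness[where f' = "\<lambda>h l. blk (h l) 0 K"])
  show "\<forall>a\<in>idx_below K. (\<lambda>l. blk (cube_pt K a l) 0 K) = a"
    by (auto simp: cube_pt_eq idx_below_def blk_pt1)
  show "\<forall>a'\<in>PK K. cube_pt K (\<lambda>l. blk (a' l) 0 K) = a'"
    by (auto simp: cube_pt_eq PK_def pt1_blk)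
  show "cube_pt K ` idx_below K \<subseteq> PK K" by (auto simp: cube_pt_eq PK_def pt1_P1)
  show "(\<lambda>h l. blk (h l) 0 K) ` PK K \<subseteq> idx_below K" by (auto simp: idx_below_def blk_less)
qed

lemma sum_idx_PK: "(\<Sum>m\<in>idx_below K. f (cube_pt K m)) = (\<Sum>h\<in>(PK K :: 'd pt set). f h)"
  using sum.reindex_bij_betw[OF cube_pt_bij, of f K] by simp

definition dep :: "('d pt \<Rightarrow> real) \<Rightarrow> nat \<Rightarrow> bool" where
  "dep F K \<longleftrightarrow> (\<forall>h h'. (\<forall>l t. t < K \<longrightarrow> h l t = h' l t) \<longrightarrow> F h = F h')"

lemma dep_mono: "dep F K \<Longrightarrow> K \<le> K' \<Longrightarrow> dep F K'"
  unfolding dep_def by auto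

lemma dep_mult: "dep F K \<Longrightarrow> dep G K \<Longrightarrow> dep (\<lambda>h. F h * G h) K"
  unfolding dep_def by metis

definition upd :: "nat \<Rightarrow> 'd pt \<Rightarrow> ('d \<Rightarrow> bool) \<Rightarrow> 'd pt" where
  "upd n h c = (\<lambda>l. (h l)(n := c l))"

lemma PK_Suc: "PK (Suc n) = (\<lambda>(h, c). upd n h c) ` (PK n \<times> UNIV)"
proof (intro equalityI subsetI)
  fix h :: "'d pt" assume h: "h \<in> PK (Suc n)"
  define h0 where "h0 = (\<lambda>l. (h l)(n := False))"
  have "h0 \<in> PK n" unfolding PK_def P1_def h0_def
  proof (clarify)
    fix l t assume "n \<le> t" "((h l)(n := False)) t"
    then show False using h by (cases "t = n") (auto simp: PK_def P1_def)
  qed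
  moreover have "h = upd n h0 (\<lambda>l. h l n)" by (auto simp: upd_def h0_def fun_eq_iff)
  ultimately show "h \<in> (\<lambda>(h, c). upd n h c) ` (PK n \<times> UNIV)"
    by (intro image_eqI[of _ _ "(h0, \<lambda>l. h l n)"]) auto
next
  fix h :: "'d pt" assume "h \<in> (\<lambda>(h, c). upd n h c) ` (PK n \<times> UNIV)"
  then obtain h0 c where "h0 \<in> PK n" "h = upd n h0 c" by auto
  then show "h \<in> PK (Suc n)" by (auto simp: PK_def P1_def upd_def)
qed

lemma PK_Suc_inj: "inj_on (\<lambda>(h, c). upd n h c) (PK n \<times> UNIV)"
proof (rule inj_onI, clarify)
  fix h c h' c' assume h: "h \<in> PK n" "h' \<in> PK n" and e: "upd n h c = upd n h' c'"
  show "h = h' \<and> c = c'"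
  proof
    show "h = h'"
    proof (intro ext)
      fix l t
      show "h l t = h' l t"
      proof (cases "t = n")
        case True then show ?thesis using h by (auto simp: PK_def P1_def)
      next
        case False then show ?thesis using fun_cong[OF fun_cong[OF e, of l], of t] by (simp add: upd_def)
      qed
    qed
    show "c = c'"
    proof
      fix l show "c l = c' l" using fun_cong[OF fun_cong[OF e, of l], of n] by (simp add: upd_def)
    qed
  qed
qed

lemma PK_step: assumes "dep F n"
  shows "sum F (PK (Suc n) :: 'd::finite pt set) = of_nat (card (UNIV :: ('d \<Rightarrow> bool) set)) * sum F (PK n)"
proof -
  have "sum F (PK (Suc n)) = sum (\<lambda>(h, c). F (upd n h c)) (PK n \<times> (UNIV :: ('d \<Rightarrow> bool) set))"
    unfolding PK_Suc by (subst sum.reindex[OF PK_Suc_inj]) (simp add: case_prod_beta)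
  also have "\<dots> = (\<Sum>h\<in>PK n. \<Sum>c\<in>(UNIV :: ('d \<Rightarrow> bool) set). F (upd n h c))"
    by (simp add: sum.cartesian_product)
  also have "\<dots> = (\<Sum>h\<in>PK n. \<Sum>c\<in>(UNIV :: ('d \<Rightarrow> bool) set). F h)"
  proof (rule sum.cong[OF refl], rule sum.cong[OF refl])
    fix h :: "'d pt" and c :: "'d \<Rightarrow> bool"
    have "\<forall>l t. t < n \<longrightarrow> upd n h c l t = h l t" by (simp add: upd_def)
    then show "F (upd n h c) = F h" using assms unfolding dep_def by blast
  qed
  finally show ?thesis by (simp add: sum_distrib_left)
qed

definition Avg :: "nat \<Rightarrow> ('d::finite pt \<Rightarrow> real) \<Rightarrow> real" where
  "Avg K F = sum F (PK K) / 2^(K * card (UNIV::'d set))"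

lemma card_fun_bool: "card (UNIV :: ('d::finite \<Rightarrow> bool) set) = 2^card (UNIV::'d set)"
proof -
  have "card (PK (Suc 0) :: 'd pt set) = card (UNIV :: ('d \<Rightarrow> bool) set) * card (PK 0 :: 'd pt set)"
  proof -
    have "real (card (PK (Suc 0) :: 'd pt set)) = real (card (UNIV :: ('d \<Rightarrow> bool) set)) * real (card (PK 0 :: 'd pt set))"
      using PK_step[of "\<lambda>_. 1" 0] by (simp add: dep_def)
    then show ?thesis by (simp only: of_nat_mult[symmetric] of_nat_eq_iff)
  qed
  then show ?thesis by (simp add: card_PK)
qed

lemma Ex_step: "dep F n \<Longrightarrow> Avg (Suc n) F = Avg n F"
  unfolding Avg_def by (simp add: PK_step card_fun_bool power_add mult.commute)

lemma Ex_mono: assumes d: "dep F K" and k: "K \<le> K'" shows "Avg K' F = Avg K F"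
  using k
proof (induction K' rule: dec_induct)
  case base then show ?case by simp
next
  case (step n)
  have "dep F n" using dep_mono d step by blast
  then show ?case using step.IH by (simp add: Ex_step)
qed

lemma Ex_prod: "Avg K (\<lambda>h. \<Prod>l\<in>UNIV. f l (h l)) = (\<Prod>l\<in>(UNIV::'d::finite set). Ex1 K (f l))"
  unfolding Avg_def Ex1_def sum_PK_prod
  by (simp add: prod_dividef power_mult mult.commute)

definition flipv :: "'d \<Rightarrow> nat \<Rightarrow> 'd pt \<Rightarrow> 'd pt" where
  "flipv l q h = h(l := (h l)(q := \<not> h l q))"

lemma PK_flip_zero:
  fixes F :: "'d::finite pt \<Rightarrow> real"
  assumes q: "q < K" and h: "\<And>h. h \<in> PK K \<Longrightarrow> F (flipv l q h) = - F h"
  shows "sum F (PK K) = 0"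
proof (rule sum_invol_zero[where \<sigma> = "flipv l q"])
  fix x :: "'d pt" assume x: "x \<in> PK K"
  show "flipv l q x \<in> PK K" using x q by (auto simp: PK_def P1_def flipv_def)
  show "flipv l q (flipv l q x) = x" by (auto simp: flipv_def)
  show "F (flipv l q x) = - F x" by (rule h[OF x])
qed

lemma walshv_flip: "walshv n (flipv l q h) = (if bit (n l) q then -1 else 1) * walshv n h"
proof -
  have "walshv n (flipv l q h) = walsh (n l) ((h l)(q := \<not> h l q)) * (\<Prod>l'\<in>UNIV - {l}. walsh (n l') (h l'))"
    unfolding walshv_def flipv_def by (subst prod.remove[of _ l]) auto
  moreover have "walshv n h = walsh (n l) (h l) * (\<Prod>l'\<in>UNIV - {l}. walsh (n l') (h l'))"
    unfolding walshv_def by (subst prod.remove[of _ l]) auto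
  ultimately show ?thesis by (simp add: walsh_flip)
qed

lemma walshv_dep: "n \<in> idx_below K \<Longrightarrow> dep (walshv n) K"
  unfolding dep_def walshv_def idx_below_def
  by (auto intro!: prod.cong walsh_cong dest: bit_small)


lemma ms_Suc: "1 \<le> s \<Longrightarrow> m_seq (Suc s) = 4 * m_seq s + 2"
  by (cases s) (auto simp del: m_seq.simps(3), simp)

lemma ms_1[simp]: "m_seq (Suc 0) = 0" by simp

lemma ms_step_less: "1 \<le> s \<Longrightarrow> m_seq s < m_seq (Suc s)"
  using ms_Suc by simp

lemma ms_mono_lt: "1 \<le> s \<Longrightarrow> s < t \<Longrightarrow> m_seq s < m_seq t"
proof (induction t rule: less_induct)
  case (less t)
  then obtain t' where t: "t = Suc t'" by (cases t) auto
  show ?case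
  proof (cases "s = t'")
    case True then show ?thesis using t less ms_step_less by auto
  next
    case False
    then have "s < t'" using less t by auto
    then have "m_seq s < m_seq t'" using less t by auto
    also have "\<dots> < m_seq t" using t ms_step_less \<open>s < t'\<close> less by auto
    finally show ?thesis .
  qed
qed

lemma ms_mono_le: "1 \<le> s \<Longrightarrow> s \<le> t \<Longrightarrow> m_seq s \<le> m_seq t"
  using ms_mono_lt[of s t] by (cases "s = t") auto

lemma ms_inj: "1 \<le> s \<Longrightarrow> 1 \<le> t \<Longrightarrow> m_seq s = m_seq t \<Longrightarrow> s = t"
  using ms_mono_lt[of s t] ms_mono_lt[of t s] by (cases "s < t") (auto simp: not_less le_less)

lemma ms_ge: "2 \<le> s \<Longrightarrow> s \<le> m_seq s"
proof (induction s rule: dec_induct)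
  case base then show ?case by (simp add: numeral_2_eq_2)
next
  case (step n) then show ?case using ms_Suc[of n] by simp
qed

lemma ms_ge': "s \<le> m_seq (Suc (Suc s))"
  using ms_ge[of "Suc (Suc s)"] by simp

fun Tc :: "nat \<Rightarrow> nat" where
  "Tc 0 = 0"
| "Tc (Suc k) = Tc k + (if \<exists>t\<ge>1. 2 * m_seq t = k then 1 else 0)"

lemma Tc_iff: "1 \<le> t \<Longrightarrow> t \<le> Tc k \<longleftrightarrow> 2 * m_seq t < k"
proof (induction k arbitrary: t)
  case 0 then show ?case by simp
next
  case (Suc k)
  show ?case
  proof (cases "\<exists>t\<ge>1. 2 * m_seq t = k")
    case False
    then have "Tc (Suc k) = Tc k" by simp
    moreover have "2 * m_seq t \<noteq> k" using False Suc.prems by blast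
    ultimately show ?thesis using Suc.IH[OF Suc.prems] by auto
  next
    case True
    then obtain t0 where t0: "1 \<le> t0" "2 * m_seq t0 = k" by blast
    have TS: "Tc (Suc k) = Tc k + 1" using True by simp
    have lo: "t0 - 1 \<le> Tc k"
    proof (cases "t0 = 1")
      case True then show ?thesis by simp
    next
      case False
      then have "2 * m_seq (t0 - 1) < k" using t0 ms_mono_lt[of "t0 - 1" t0] by auto
      then show ?thesis using Suc.IH[of "t0 - 1"] False t0 by auto
    qed
    have hi: "\<not> t0 \<le> Tc k" using Suc.IH[OF t0(1)] t0 by simp
    have T0: "Tc k = t0 - 1" using lo hi by simp
    show ?thesis
    proof
      assume "t \<le> Tc (Suc k)"
      then have "t \<le> t0" using TS T0 t0 by simp
      then have "m_seq t \<le> m_seq t0" using ms_mono_le Suc.prems by blast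
      then show "2 * m_seq t < Suc k" using t0 by simp
    next
      assume a: "2 * m_seq t < Suc k"
      then have "m_seq t \<le> m_seq t0" using t0 by simp
      then have "t \<le> t0" using ms_mono_lt[of t0 t] t0 by (cases "t0 < t") auto
      then show "t \<le> Tc (Suc k)" using TS T0 t0 by simp
    qed
  qed
qed

lemma Tc_mono: "Tc k \<le> Tc (Suc k)" by simp


definition agree :: "nat \<Rightarrow> 'd pt \<Rightarrow> 'd pt \<Rightarrow> bool" where
  "agree K h h' \<longleftrightarrow> (\<forall>l t. t < K \<longrightarrow> h l t = h' l t)"

lemma agree_mono: "agree K h h' \<Longrightarrow> K' \<le> K \<Longrightarrow> agree K' h h'"
  unfolding agree_def by auto

lemma agree_sym: "agree K h h' \<Longrightarrow> agree K h' h"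
  unfolding agree_def by auto

lemma agree_trans: "agree K h h' \<Longrightarrow> agree K h' h'' \<Longrightarrow> agree K h h''"
  unfolding agree_def by auto

lemma dep_iff: "dep F K \<longleftrightarrow> (\<forall>h h'. agree K h h' \<longrightarrow> F h = F h')"
  unfolding dep_def agree_def by auto

lemma agree_flipv: "K \<le> q \<Longrightarrow> agree K (flipv l q h) h"
  unfolding agree_def flipv_def by auto

lemma walshv_agree: "n \<in> idx_below K \<Longrightarrow> agree K h h' \<Longrightarrow> walshv n h = walshv n h'"
  using walshv_dep[of n K] by (simp add: dep_iff)

lemma blk_agree: "a + b \<le> K \<Longrightarrow> agree K h h' \<Longrightarrow> blk (h l) a b = blk (h' l) a b"
  unfolding agree_def by (intro blk_cong) auto

lemma walshv_pm: "walshv n h = 1 \<or> walshv n h = -1"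
proof -
  have "\<And>A. finite A \<Longrightarrow> (\<Prod>l\<in>A. walsh (n l) (h l)) = 1 \<or> (\<Prod>l\<in>A. walsh (n l) (h l)) = -1"
  proof -
    fix A :: "'a set" assume "finite A"
    then show "(\<Prod>l\<in>A. walsh (n l) (h l)) = 1 \<or> (\<Prod>l\<in>A. walsh (n l) (h l)) = -1"
    proof (induction A rule: finite_induct)
      case (insert x F)
      then show ?case using walsh_pm[of "n x" "h x"] by auto
    qed simp
  qed
  then show ?thesis unfolding walshv_def by simp
qed

lemma walshv_sq[simp]: "walshv n h * walshv n h = 1"
  using walshv_pm[of n h] by auto

lemma walshv_abs[simp]: "\<bar>walshv n h\<bar> = 1"
  using walshv_pm[of n h] by auto

lemma agree_cube_pt: "m \<in> idx_below K \<Longrightarrow> h \<in> dcube K m \<Longrightarrow> agree K h (cube_pt K m)"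
  unfolding agree_def dcube_def dint_def cube_pt_def by auto

lemma dcube_iff_blk: "m \<in> idx_below K \<Longrightarrow> h \<in> dcube K m \<longleftrightarrow> (\<forall>l. blk (h l) 0 K = m l)"
  unfolding dcube_def idx_below_def by (simp add: dint_iff)

lemma cube_pt_dcube: "cube_pt K m \<in> dcube K m"
  by (simp add: dcube_def cube_pt_eq pt1_dint)

lemma agree_dcube: "m \<in> idx_below K \<Longrightarrow> agree K h (cube_pt K m) \<Longrightarrow> h \<in> dcube K m"
  unfolding agree_def dcube_def dint_def cube_pt_def by auto

lemma blk_cube_pt: "m \<in> idx_below K \<Longrightarrow> blk (cube_pt K m l) 0 K = m l"
  by (simp add: cube_pt_eq blk_pt1 idx_below_def)

lemma agree_blk_pt: "agree K h (cube_pt K (\<lambda>l. blk (h l) 0 K))"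
  unfolding agree_def cube_pt_eq using blk_agree_pt1 by blast

lemma blk_idx: "(\<lambda>l. blk (h l) a K) \<in> idx_below K"
  by (simp add: idx_below_def blk_less)

lemma wc_shift:
  assumes n: "n \<in> idx_below M"
  shows "walsh_const M n (\<lambda>l. blk (h l) M M) = walshv (\<lambda>l. 2^M * n l) h"
  unfolding walsh_const_def walshv_def cube_pt_eq walsh_shift
proof (rule prod.cong[OF refl], rule walsh_cong)
  fix l k assume b: "bit (n l) k"
  then have k: "k < M" using n bit_small by (auto simp: idx_below_def)
  have "M + M - 1 - (M - 1 - k) = M + k" using k by simp
  then show "pt1 M (blk (h l) M M) k = h l (M + k)" using k by (simp add: pt1_def bit_blk)
qed

locale SP =
  fixes \<pi> :: "nat \<Rightarrow> 'd::finite \<Rightarrow> nat \<Rightarrow> nat" and k0 :: nat and m0 :: "'d idx"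
  assumes pibij: "\<forall>s\<ge>1. \<forall>l. bij_betw (\<pi> s l) {..<2 ^ m_seq s} {..<2 ^ m_seq s}"
    and m0: "m0 \<in> idx_below k0"
begin

lemma pi_lt: "1 \<le> t \<Longrightarrow> \<mu> < 2^m_seq t \<Longrightarrow> \<pi> t l \<mu> < 2^m_seq t"
  using pibij by (meson bij_betwE lessThan_iff)

lemma pi_inj: "1 \<le> t \<Longrightarrow> inj_on (\<pi> t l) {..<2^m_seq t}"
  using pibij bij_betw_imp_inj_on by blast

definition Rt :: "nat \<Rightarrow> 'd pt \<Rightarrow> real" where
  "Rt t h = rad (2 * m_seq t) h"

definition phi :: "nat \<Rightarrow> 'd pt \<Rightarrow> real" where
  "phi t h = walshv (\<lambda>l. 2^(m_seq t) * \<pi> t l (blk (h l) 0 (m_seq t))) h"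

lemma pib_idx: "1 \<le> t \<Longrightarrow> (\<lambda>l. \<pi> t l (blk (h l) 0 (m_seq t))) \<in> idx_below (m_seq t)"
  using pi_lt blk_less by (simp add: idx_below_def)

lemma Fs_iff: assumes t: "1 \<le> t" shows "h \<in> F_s \<pi> t \<longleftrightarrow> Rt t h = phi t h"
proof -
  define M where "M = m_seq t"
  define \<beta> where "\<beta> = (\<lambda>l. blk (h l) 0 M)"
  define \<beta>' where "\<beta>' = (\<lambda>l. blk (h l) M M)"
  have bi: "\<beta> \<in> idx_below M" "\<beta>' \<in> idx_below M" unfolding \<beta>_def \<beta>'_def by (rule blk_idx)+
  have app: "blk (h l) 0 (2*M) = 2^M * \<beta> l + \<beta>' l" for l
    using blk_append[of "h l" 0 M M] by (simp add: \<beta>_def \<beta>'_def mult_2)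
  have ph: "phi t h = walsh_const M (\<lambda>l. \<pi> t l (\<beta> l)) \<beta>'"
    unfolding phi_def \<beta>'_def M_def[symmetric] \<beta>_def
    by (rule wc_shift[symmetric]) (use pib_idx[OF t, of h] in \<open>simp add: M_def\<close>)
  have lt: "2^M * a + b < 2^(2*M)" if "a < 2^M" "b < 2^M" for a b :: nat
  proof -
    have "2^M * a + b < 2^M * a + 2^M" using that by simp
    also have "\<dots> = 2^M * (a + 1)" by simp
    also have "\<dots> \<le> 2^M * 2^M" using that by (intro mult_le_mono2) simp
    finally show ?thesis by (simp add: power_add[symmetric] mult_2)
  qed
  have incube: "h \<in> dcube (2*M) (\<lambda>l. 2^M * a l + b l) \<longleftrightarrow> a = \<beta> \<and> b = \<beta>'"
    if ab: "a \<in> idx_below M" "b \<in> idx_below M" for a b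
  proof -
    have idx: "(\<lambda>l. 2^M * a l + b l) \<in> idx_below (2*M)" using ab lt by (simp add: idx_below_def)
    have "h \<in> dcube (2*M) (\<lambda>l. 2^M * a l + b l) \<longleftrightarrow> (\<forall>l. 2^M * \<beta> l + \<beta>' l = 2^M * a l + b l)"
      using dcube_iff_blk[OF idx, of h] by (simp add: app)
    also have "\<dots> \<longleftrightarrow> a = \<beta> \<and> b = \<beta>'"
    proof
      assume e: "\<forall>l. 2^M * \<beta> l + \<beta>' l = 2^M * a l + b l"
      have "a l = \<beta> l \<and> b l = \<beta>' l" for l
      proof -
        have "(2^M * \<beta> l + \<beta>' l) div 2^M = (2^M * a l + b l) div 2^M"
             "(2^M * \<beta> l + \<beta>' l) mod 2^M = (2^M * a l + b l) mod 2^M" using e by auto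
        then show ?thesis using ab bi by (simp add: idx_below_def)
      qed
      then show "a = \<beta> \<and> b = \<beta>'" by auto
    qed auto
    finally show ?thesis .
  qed
  show ?thesis
  proof
    assume "h \<in> F_s \<pi> t"
    then obtain a b where ab: "a \<in> idx_below M" "b \<in> idx_below M"
      and hc: "h \<in> dcube (2*M) (\<lambda>l. 2^M * a l + b l)"
      and r: "rad (2*M) h = walsh_const M (\<lambda>l. \<pi> t l (a l)) b"
      unfolding F_s_def M_def by blast
    then have "a = \<beta>" "b = \<beta>'" using incube by auto
    then show "Rt t h = phi t h" using r ph by (simp add: Rt_def M_def)
  next
    assume "Rt t h = phi t h"
    then have "rad (2*M) h = walsh_const M (\<lambda>l. \<pi> t l (\<beta> l)) \<beta>'" using ph by (simp add: Rt_def M_def)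
    moreover have "h \<in> dcube (2*M) (\<lambda>l. 2^M * \<beta> l + \<beta>' l)" using incube[OF bi] by simp
    ultimately show "h \<in> F_s \<pi> t" unfolding F_s_def M_def[symmetric] using bi by blast
  qed
qed

lemma Rt_agree: "agree (Suc (2 * m_seq t)) h h' \<Longrightarrow> Rt t h = Rt t h'"
  unfolding Rt_def rad_def by (rule walshv_agree) (auto simp: idx_below_def)

lemma phi_agree: assumes t: "1 \<le> t" and a: "agree (2 * m_seq t) h h'" shows "phi t h = phi t h'"
proof -
  have b: "blk (h l) 0 (m_seq t) = blk (h' l) 0 (m_seq t)" for l by (rule blk_agree[OF _ a]) simp
  have lt: "2 ^ m_seq t * \<pi> t l (blk (h' l) 0 (m_seq t)) < 2^(2 * m_seq t)" for l
  proof -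
    have "\<pi> t l (blk (h' l) 0 (m_seq t)) < 2^m_seq t" using pi_lt[OF t] blk_less by blast
    then have "2 ^ m_seq t * \<pi> t l (blk (h' l) 0 (m_seq t)) < 2 ^ m_seq t * 2^m_seq t" by simp
    then show ?thesis by (simp add: power_add[symmetric] mult_2)
  qed
  show ?thesis unfolding phi_def b by (rule walshv_agree[OF _ a]) (use lt in \<open>simp add: idx_below_def\<close>)
qed

lemma Fs_agree: "1 \<le> t \<Longrightarrow> agree (Suc (2 * m_seq t)) h h' \<Longrightarrow> h \<in> F_s \<pi> t \<longleftrightarrow> h' \<in> F_s \<pi> t"
  using Fs_iff Rt_agree phi_agree agree_mono by (metis le_SucI order_refl)

lemma fac_eq: assumes t: "1 \<le> t" shows "1 + Rt t h * phi t h = (if h \<in> F_s \<pi> t then 2 else 0)"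
proof -
  have r: "Rt t h = 1 \<or> Rt t h = -1" unfolding Rt_def rad_def by (rule walshv_pm)
  have p: "phi t h = 1 \<or> phi t h = -1" unfolding phi_def by (rule walshv_pm)
  show ?thesis using Fs_iff[OF t, of h] r p by auto
qed

definition Pd :: "nat \<Rightarrow> 'd pt \<Rightarrow> real" where
  "Pd T h = (if \<forall>t\<in>{1..T}. h \<in> F_s \<pi> t then 2^T else 0)"

definition ind :: "'d pt \<Rightarrow> real" where
  "ind h = of_bool (\<forall>l. blk (h l) 0 k0 = m0 l)"

definition U :: "nat \<Rightarrow> 'd pt \<Rightarrow> real" where
  "U T h = ind h * Pd T h"

lemma Pd_Suc: "Pd (Suc T) h = Pd T h * (1 + Rt (Suc T) h * phi (Suc T) h)"
  by (simp add: fac_eq Pd_def atLeastAtMostSuc_conv)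

lemma U_Suc: "U (Suc T) h = U T h * (1 + Rt (Suc T) h * phi (Suc T) h)"
  by (simp add: U_def Pd_Suc)

lemma U_nonneg: "0 \<le> U T h" by (simp add: U_def Pd_def ind_def)

lemma U_le: "U T h \<le> 2^T" by (simp add: U_def Pd_def ind_def)

lemma ind_agree: "k0 \<le> K \<Longrightarrow> agree K h h' \<Longrightarrow> ind h = ind h'"
  unfolding ind_def using blk_agree[of 0 k0 K h h'] by simp

lemma Pd_agree: assumes "\<forall>t\<in>{1..T}. Suc (2 * m_seq t) \<le> K" "agree K h h'" shows "Pd T h = Pd T h'"
proof -
  have "\<forall>t\<in>{1..T}. h \<in> F_s \<pi> t \<longleftrightarrow> h' \<in> F_s \<pi> t"
    using assms Fs_agree agree_mono by (meson atLeastAtMost_iff)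
  then show ?thesis unfolding Pd_def by simp
qed

lemma dep_U_gen: "k0 \<le> K \<Longrightarrow> \<forall>t\<in>{1..T}. Suc (2 * m_seq t) \<le> K \<Longrightarrow> dep (U T) K"
  unfolding dep_iff U_def using ind_agree Pd_agree by metis

lemma dep_U: assumes "k0 \<le> K" "Suc (2 * m_seq T) \<le> K" shows "dep (U T) K"
proof (rule dep_U_gen[OF assms(1)], intro ballI)
  fix t assume "t \<in> {1..T}"
  then have "m_seq t \<le> m_seq T" using ms_mono_le by auto
  then show "Suc (2 * m_seq t) \<le> K" using assms(2) by simp
qed

definition Kc :: "nat \<Rightarrow> 'd idx \<Rightarrow> nat" where
  "Kc T n = k0 + Suc (2 * m_seq T) + (\<Sum>l\<in>UNIV. n l)"

definition A :: "nat \<Rightarrow> 'd idx \<Rightarrow> real" where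
  "A T n = Avg (Kc T n) (\<lambda>h. walshv n h * U T h)"

lemma n_Kc: "n \<in> idx_below (Kc T n)"
proof -
  have "n l < 2^(Kc T n)" for l
  proof -
    have "n l \<le> (\<Sum>l\<in>UNIV. n l)" by (rule member_le_sum) auto
    also have "\<dots> \<le> Kc T n" by (simp add: Kc_def)
    also have "Kc T n < 2^(Kc T n)" by (rule less_exp)
    finally show ?thesis .
  qed
  then show ?thesis by (simp add: idx_below_def)
qed

lemma idx_below_mono: assumes "n \<in> idx_below K" "K \<le> K'" shows "n \<in> idx_below K'"
proof -
  have "n l < 2^K'" for l
  proof -
    have "n l < 2^K" using assms(1) by (simp add: idx_below_def)
    also have "(2::nat)^K \<le> 2^K'" using assms(2) by simp
    finally show ?thesis .
  qed
  then show ?thesis by (simp add: idx_below_def)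
qed

lemma A_eq: assumes d: "dep (U T) K" and n: "n \<in> idx_below K"
  shows "Avg K (\<lambda>h. walshv n h * U T h) = A T n"
proof -
  have dK: "dep (U T) (Kc T n)" by (rule dep_U) (auto simp: Kc_def)
  define K2 where "K2 = min K (Kc T n)"
  have d2: "dep (U T) K2" unfolding K2_def min_def using d dK by auto
  have n2: "n \<in> idx_below K2" unfolding K2_def min_def using n n_Kc by auto
  have dd: "dep (\<lambda>h. walshv n h * U T h) K2" by (rule dep_mult[OF walshv_dep[OF n2] d2])
  have "Avg K (\<lambda>h. walshv n h * U T h) = Avg K2 (\<lambda>h. walshv n h * U T h)"
    by (rule Ex_mono[OF dd]) (simp add: K2_def)
  also have "\<dots> = Avg (Kc T n) (\<lambda>h. walshv n h * U T h)"
    by (rule Ex_mono[OF dd, symmetric]) (simp add: K2_def)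
  finally show ?thesis by (simp add: A_def)
qed

lemma Avg_add: "Avg K (\<lambda>h. f h + g h) = Avg K f + Avg K g"
  by (simp add: Avg_def sum.distrib add_divide_distrib)

lemma A_zero_high:
  assumes k: "k0 \<le> Suc (2 * m_seq T)" and nl: "2^(Suc (2 * m_seq T)) \<le> n l"
  shows "A T n = 0"
proof -
  obtain q where q: "Suc (2 * m_seq T) \<le> q" "bit (n l) q" using big_has_bit[OF nl] by blast
  have qK: "q < Kc T n" using n_Kc[of n T] q(2) bit_small by (auto simp: idx_below_def)
  have dU: "dep (U T) (Suc (2 * m_seq T))" by (rule dep_U[OF k]) simp
  have "sum (\<lambda>h. walshv n h * U T h) (PK (Kc T n)) = 0"
  proof (rule PK_flip_zero[OF qK])
    fix h :: "'d pt"
    have "agree (Suc (2 * m_seq T)) (flipv l q h) h" by (rule agree_flipv[OF q(1)])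
    then have "U T (flipv l q h) = U T h" using dU unfolding dep_iff by blast
    then show "walshv n (flipv l q h) * U T (flipv l q h) = - (walshv n h * U T h)"
      using q by (simp add: walshv_flip)
  qed
  then show ?thesis by (simp add: A_def Avg_def)
qed

lemma A_step:
  assumes nj: "n j < 2^(2 * m_seq (Suc T))" and k: "k0 \<le> 2 * m_seq (Suc T)"
  shows "A (Suc T) n = A T n"
proof -
  define M' where "M' = m_seq (Suc T)"
  define K where "K = max (Kc T n) (Kc (Suc T) n)"
  have K1: "dep (U T) K" "dep (U (Suc T)) K" by (rule dep_U; simp add: K_def Kc_def)+
  have nK: "n \<in> idx_below K" by (rule idx_below_mono[OF n_Kc[of n T]]) (simp add: K_def)
  have qK: "2 * M' < K" by (simp add: K_def Kc_def M'_def)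
  have dU: "dep (U T) (2 * M')"
  proof (cases "T = 0")
    case True
    then show ?thesis using k dep_U_gen[of "2 * M'" T] by (simp add: M'_def)
  next
    case False
    then have "m_seq T < M'" using ms_step_less[of T] by (simp add: M'_def)
    then show ?thesis using k by (intro dep_U) (auto simp: M'_def)
  qed
  have z: "sum (\<lambda>h. walshv n h * (U T h * (Rt (Suc T) h * phi (Suc T) h))) (PK K) = 0"
  proof (rule PK_flip_zero[OF qK])
    fix h :: "'d pt"
    have ag: "agree (2 * M') (flipv j (2*M') h) h" by (rule agree_flipv) simp
    have "U T (flipv j (2*M') h) = U T h" using dU ag unfolding dep_iff by blast
    moreover have "phi (Suc T) (flipv j (2*M') h) = phi (Suc T) h" using ag phi_agree[of "Suc T"] by (simp add: M'_def)
    moreover have "\<not> bit (n j) (2*M')" using nj bit_small[of "n j" "2*M'"] by (auto simp: M'_def)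
    moreover have "Rt (Suc T) (flipv j (2*M') h) = - Rt (Suc T) h"
      unfolding Rt_def rad_def by (simp add: walshv_flip M'_def bit_exp_iff)
    ultimately show "walshv n (flipv j (2*M') h) * (U T (flipv j (2*M') h) * (Rt (Suc T) (flipv j (2*M') h) * phi (Suc T) (flipv j (2*M') h)))
      = - (walshv n h * (U T h * (Rt (Suc T) h * phi (Suc T) h)))"
      by (simp add: walshv_flip)
  qed
  have "A (Suc T) n = Avg K (\<lambda>h. walshv n h * U (Suc T) h)" by (rule A_eq[OF K1(2) nK, symmetric])
  also have "\<dots> = Avg K (\<lambda>h. walshv n h * U T h + walshv n h * (U T h * (Rt (Suc T) h * phi (Suc T) h)))"
    by (simp add: U_Suc algebra_simps)
  also have "\<dots> = Avg K (\<lambda>h. walshv n h * U T h)" using z by (simp add: Avg_add Avg_def)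
  also have "\<dots> = A T n" by (rule A_eq[OF K1(1) nK])
  finally show ?thesis .
qed

lemma A_chain:
  assumes "\<And>T. T0 \<le> T \<Longrightarrow> (\<exists>j. n j < 2^(2 * m_seq (Suc T))) \<and> k0 \<le> 2 * m_seq (Suc T)"
  shows "T0 \<le> T \<Longrightarrow> A T n = A T0 n"
proof (induction T rule: dec_induct)
  case base then show ?case by simp
next
  case (step T)
  then obtain j where "n j < 2^(2 * m_seq (Suc T))" "k0 \<le> 2 * m_seq (Suc T)" using assms by blast
  then show ?case using A_step step by simp
qed

end


definition Sig :: "'d::finite idx set" where "Sig = {\<sigma>. \<forall>l. \<sigma> l < 2}"

definition sgp :: "'d::finite idx \<Rightarrow> real" where "sgp \<sigma> = (\<Prod>l\<in>UNIV. sg (\<sigma> l = 1))"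

lemma card_Sig: "card (Sig :: 'd::finite idx set) = 2^card (UNIV :: 'd set)"
proof -
  have e: "(Sig :: 'd idx set) = PiE UNIV (\<lambda>_. {..<2})" by (simp add: Sig_def PiE_UNIV_domain Pi_def)
  have "card (PiE (UNIV :: 'd set) (\<lambda>_. {..<2::nat})) = 2^card (UNIV :: 'd set)" by (simp add: card_PiE)
  then show ?thesis using e by simp
qed

lemma finite_Sig: "finite (Sig :: 'd::finite idx set)"
proof -
  have e: "(Sig :: 'd idx set) = PiE UNIV (\<lambda>_. {..<2::nat})" by (simp add: Sig_def PiE_UNIV_domain Pi_def)
  have "finite (PiE (UNIV :: 'd set) (\<lambda>_. {..<2::nat}))" by (simp add: finite_PiE)
  then show ?thesis using e by simp
qed

lemma sgp_pm: fixes \<sigma> :: "'d::finite idx" shows "sgp \<sigma> = 1 \<or> sgp \<sigma> = -1"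
proof -
  have "\<And>A. finite A \<Longrightarrow> (\<Prod>l\<in>A. sg (\<sigma> l = 1)) = 1 \<or> (\<Prod>l\<in>A. sg (\<sigma> l = 1)) = -1"
  proof -
    fix A :: "'d set" assume "finite A"
    then show "(\<Prod>l\<in>A. sg (\<sigma> l = 1)) = 1 \<or> (\<Prod>l\<in>A. sg (\<sigma> l = 1)) = -1"
      by (induction A rule: finite_induct) (auto simp: sg_def)
  qed
  then show ?thesis unfolding sgp_def by simp
qed

lemma sgp_flip: fixes \<sigma> :: "'d::finite idx" assumes "\<sigma> \<in> Sig" shows "sgp (\<sigma>(l0 := (if \<sigma> l0 = 0 then 1 else 0))) = - sgp \<sigma>"
proof -
  have "sgp (\<sigma>(l0 := (if \<sigma> l0 = 0 then 1 else 0))) = sg ((if \<sigma> l0 = 0 then 1 else 0) = (1::nat)) * (\<Prod>l\<in>UNIV - {l0}. sg (\<sigma> l = 1))"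
    unfolding sgp_def by (subst prod.remove[of _ l0]) auto
  moreover have "sgp \<sigma> = sg (\<sigma> l0 = 1) * (\<Prod>l\<in>UNIV - {l0}. sg (\<sigma> l = 1))"
    unfolding sgp_def by (subst prod.remove[of _ l0]) auto
  moreover have "sg ((if \<sigma> l0 = 0 then 1 else 0) = (1::nat)) = - sg (\<sigma> l0 = 1)"
  proof -
    have "\<sigma> l0 < 2" using assms by (simp add: Sig_def)
    then have "\<sigma> l0 = 0 \<or> \<sigma> l0 = 1" by auto
    then show ?thesis by (auto simp: sg_def)
  qed
  ultimately show ?thesis by simp
qed

lemma card_sgp: assumes v: "v = 1 \<or> v = -1"
  shows "card {\<sigma>\<in>(Sig :: 'd::finite idx set). sgp \<sigma> = v} = 2^(card (UNIV :: 'd set) - 1)"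
proof -
  define S where "S = (Sig :: 'd idx set)"
  define l0 :: 'd where "l0 = undefined"
  define \<tau> where "\<tau> = (\<lambda>\<sigma>::'d idx. \<sigma>(l0 := (if \<sigma> l0 = 0 then 1 else 0)))"
  have tS: "\<tau> \<sigma> \<in> S" if "\<sigma> \<in> S" for \<sigma> using that by (auto simp: S_def Sig_def \<tau>_def)
  have tt: "\<tau> (\<tau> \<sigma>) = \<sigma>" if "\<sigma> \<in> S" for \<sigma>
  proof -
    have "\<sigma> l0 < 2" using that by (simp add: S_def Sig_def)
    then have "\<sigma> l0 = 0 \<or> \<sigma> l0 = 1" by auto
    then show ?thesis by (auto simp: \<tau>_def fun_eq_iff)
  qed
  have eqc: "card {\<sigma>\<in>S. sgp \<sigma> = 1} = card {\<sigma>\<in>S. sgp \<sigma> = -1}"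
  proof (rule bij_betw_same_card[of \<tau>], rule bij_betw_byWitness[where f' = \<tau>])
    show "\<forall>a\<in>{\<sigma> \<in> S. sgp \<sigma> = 1}. \<tau> (\<tau> a) = a" using tt by auto
    show "\<forall>a'\<in>{\<sigma> \<in> S. sgp \<sigma> = - 1}. \<tau> (\<tau> a') = a'" using tt by auto
    have fl: "sgp (\<tau> \<sigma>) = - sgp \<sigma>" if "\<sigma> \<in> S" for \<sigma>
      unfolding \<tau>_def using that sgp_flip unfolding S_def by blast
    show "\<tau> ` {\<sigma> \<in> S. sgp \<sigma> = 1} \<subseteq> {\<sigma> \<in> S. sgp \<sigma> = - 1}"
    proof (rule image_subsetI)
      fix \<sigma> assume a: "\<sigma> \<in> {\<sigma> \<in> S. sgp \<sigma> = 1}"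
      then show "\<tau> \<sigma> \<in> {\<sigma> \<in> S. sgp \<sigma> = - 1}" using fl[of \<sigma>] tS[of \<sigma>] by auto
    qed
    show "\<tau> ` {\<sigma> \<in> S. sgp \<sigma> = - 1} \<subseteq> {\<sigma> \<in> S. sgp \<sigma> = 1}"
    proof (rule image_subsetI)
      fix \<sigma> assume a: "\<sigma> \<in> {\<sigma> \<in> S. sgp \<sigma> = - 1}"
      then show "\<tau> \<sigma> \<in> {\<sigma> \<in> S. sgp \<sigma> = 1}" using fl[of \<sigma>] tS[of \<sigma>] by auto
    qed
  qed
  have un: "S = {\<sigma>\<in>S. sgp \<sigma> = 1} \<union> {\<sigma>\<in>S. sgp \<sigma> = -1}" using sgp_pm by auto
  have "card S = card {\<sigma>\<in>S. sgp \<sigma> = 1} + card {\<sigma>\<in>S. sgp \<sigma> = -1}"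
    by (subst un, rule card_Un_disjoint) (use finite_Sig[where 'd='d, folded S_def] in auto)
  then have "2 * card {\<sigma>\<in>S. sgp \<sigma> = v} = 2^card (UNIV :: 'd set)" using eqc v card_Sig[where 'd='d, folded S_def] by auto
  moreover have "card (UNIV :: 'd set) \<ge> 1" using card_gt_0_iff[of "UNIV :: 'd set"] by simp
  ultimately show ?thesis unfolding S_def[symmetric] by (metis (no_types, lifting) One_nat_def Suc_diff_le diff_Suc_1 mult_left_cancel power_Suc zero_neq_numeral)
qed

definition ch :: "'d idx \<Rightarrow> 'd idx \<Rightarrow> 'd idx" where
  "ch p \<sigma> = (\<lambda>l. 2 * p l + \<sigma> l)"

lemma children_eq: "children p = ch p ` Sig"
  by (auto simp: children_def ch_def Sig_def)

lemma ch_inj: "inj_on (ch p) Sig"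
  by (auto simp: inj_on_def ch_def fun_eq_iff)

lemma parent_ch: "\<sigma> \<in> Sig \<Longrightarrow> parent (ch p \<sigma>) = p"
  by (auto simp: parent_def ch_def Sig_def fun_eq_iff)

lemma ch_idx: assumes "p \<in> idx_below k" "\<sigma> \<in> Sig" shows "ch p \<sigma> \<in> idx_below (Suc k)"
proof -
  have "2 * p l + \<sigma> l < 2 * 2^k" for l
  proof -
    have "p l < 2^k" "\<sigma> l < 2" using assms by (auto simp: idx_below_def Sig_def)
    then show ?thesis by linarith
  qed
  then show ?thesis by (simp add: idx_below_def ch_def)
qed

lemma parent_idx: "m \<in> idx_below (Suc k) \<Longrightarrow> parent m \<in> idx_below k"
  by (auto simp: idx_below_def parent_def div_less_iff_less_mult mult.commute)

lemma agree_parent: "agree k (cube_pt (Suc k) c) (cube_pt k (parent c))"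
  unfolding agree_def cube_pt_eq pt1_def parent_def
proof (clarify)
  fix l t assume t: "t < k"
  have "Suc (k - 1 - t) = k - t" using t by simp
  then have "bit (c l div 2) (k - 1 - t) = bit (c l) (k - t)" by (metis bit_Suc)
  then show "(t < Suc k \<and> bit (c l) (Suc k - 1 - t)) = (t < k \<and> bit (c l div 2) (k - 1 - t))" using t by simp
qed


context SP begin

definition good :: "nat \<Rightarrow> 'd pt \<Rightarrow> bool" where
  "good k h \<longleftrightarrow> (\<forall>t\<in>{1..Tc k}. h \<in> F_s \<pi> t)"

lemma Pd_Tc: "Pd (Tc k) h = (if good k h then 2^Tc k else 0)"
  by (simp add: Pd_def good_def)

fun sq :: "'d pt \<Rightarrow> nat \<Rightarrow> 'd pt" where
  "sq h0 0 = h0"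
| "sq h0 (Suc T) = (if sq h0 T \<in> F_s \<pi> (Suc T) then sq h0 T
     else flipv undefined (2 * m_seq (Suc T)) (sq h0 T))"

lemma sq_in: "sq h0 (Suc T) \<in> F_s \<pi> (Suc T)"
proof (cases "sq h0 T \<in> F_s \<pi> (Suc T)")
  case True then show ?thesis by simp
next
  case False
  define h where "h = sq h0 T"
  define P where "P = 2 * m_seq (Suc T)"
  have ag: "agree (2 * m_seq (Suc T)) (flipv undefined P h) h" by (rule agree_flipv) (simp add: P_def)
  have ph: "phi (Suc T) (flipv undefined P h) = phi (Suc T) h" using phi_agree[of "Suc T"] ag by simp
  have rt: "Rt (Suc T) (flipv undefined P h) = - Rt (Suc T) h"
    unfolding Rt_def rad_def by (simp add: walshv_flip P_def bit_exp_iff)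
  have r: "Rt (Suc T) h = 1 \<or> Rt (Suc T) h = -1" unfolding Rt_def rad_def by (rule walshv_pm)
  have p: "phi (Suc T) h = 1 \<or> phi (Suc T) h = -1" unfolding phi_def by (rule walshv_pm)
  have "Rt (Suc T) h \<noteq> phi (Suc T) h" using False Fs_iff[of "Suc T" h] by (simp add: h_def)
  then have "Rt (Suc T) (flipv undefined P h) = phi (Suc T) (flipv undefined P h)" using r p ph rt by auto
  then have "flipv undefined P h \<in> F_s \<pi> (Suc T)" using Fs_iff[of "Suc T"] by simp
  then show ?thesis using False by (simp add: h_def P_def)
qed

lemma sq_step: "p \<noteq> 2 * m_seq (Suc T) \<Longrightarrow> sq h0 (Suc T) l p = sq h0 T l p"
  by (auto simp: flipv_def)

lemma sq_stable: assumes t: "1 \<le> t" shows "t \<le> T \<Longrightarrow> agree (Suc (2 * m_seq t)) (sq h0 T) (sq h0 t)"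
proof (induction T rule: dec_induct)
  case base then show ?case by (simp add: agree_def)
next
  case (step T)
  have "m_seq t < m_seq (Suc T)" using ms_mono_lt[OF t] step by simp
  then have "agree (Suc (2 * m_seq t)) (sq h0 (Suc T)) (sq h0 T)"
    unfolding agree_def
  proof (clarify)
    fix l p assume "m_seq t < m_seq (Suc T)" "p < Suc (2 * m_seq t)"
    then have "p \<noteq> 2 * m_seq (Suc T)" by simp
    then show "sq h0 (Suc T) l p = sq h0 T l p" by (rule sq_step)
  qed
  then show ?case using step agree_trans by blast
qed

lemma sq_h0: assumes g: "good k h0" shows "agree k (sq h0 T) h0"
proof (induction T)
  case 0 then show ?case by (simp add: agree_def)
next
  case (Suc T)
  show ?case
  proof (cases "sq h0 T \<in> F_s \<pi> (Suc T)")
    case True then show ?thesis using Suc by simp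
  next
    case False
    have "k \<le> 2 * m_seq (Suc T)"
    proof (rule ccontr)
      assume "\<not> k \<le> 2 * m_seq (Suc T)"
      then have lt: "2 * m_seq (Suc T) < k" by simp
      then have "Suc T \<le> Tc k" using Tc_iff[of "Suc T" k] by simp
      then have "h0 \<in> F_s \<pi> (Suc T)" using g by (simp add: good_def)
      moreover have "agree (Suc (2 * m_seq (Suc T))) (sq h0 T) h0" by (rule agree_mono[OF Suc]) (use lt in simp)
      ultimately have "sq h0 T \<in> F_s \<pi> (Suc T)" using Fs_agree[of "Suc T"] by simp
      then show False using False by simp
    qed
    then have "agree k (sq h0 (Suc T)) (sq h0 T)" unfolding agree_def
    proof (clarify)
      fix l p assume "k \<le> 2 * m_seq (Suc T)" "p < k"
      then have "p \<noteq> 2 * m_seq (Suc T)" by simp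
      then show "sq h0 (Suc T) l p = sq h0 T l p" by (rule sq_step)
    qed
    then show ?thesis using Suc agree_trans by blast
  qed
qed

lemma sq_const: "p + 2 \<le> T \<Longrightarrow> sq h0 T l p = sq h0 (p + 2) l p"
proof (induction T rule: dec_induct)
  case base then show ?case by simp
next
  case (step T)
  have "Suc T \<le> m_seq (Suc T)" using ms_ge[of "Suc T"] step by simp
  then have "p \<noteq> 2 * m_seq (Suc T)" using step by simp
  then show ?case using sq_step step by simp
qed

definition lim :: "'d pt \<Rightarrow> 'd pt" where
  "lim h0 = (\<lambda>l p. sq h0 (p + 2) l p)"

lemma lim_agree: "K + 2 \<le> T \<Longrightarrow> agree K (lim h0) (sq h0 T)"
  unfolding agree_def lim_def using sq_const by (metis add_le_mono1 le_trans less_imp_le_nat)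

lemma lim_in_F: "lim h0 \<in> F_pi \<pi>"
  unfolding F_pi_def
proof (rule INT_I)
  fix t :: nat assume t: "t \<in> {1..}"
  then have t1: "1 \<le> t" by simp
  define T where "T = t + 2 * m_seq t + 3"
  have a1: "agree (Suc (2 * m_seq t)) (lim h0) (sq h0 T)" by (rule lim_agree) (simp add: T_def)
  have a2: "agree (Suc (2 * m_seq t)) (sq h0 T) (sq h0 t)" by (rule sq_stable[OF t1]) (simp add: T_def)
  have "sq h0 t \<in> F_s \<pi> t" using sq_in[of h0 "t - 1"] t1 by simp
  then show "lim h0 \<in> F_s \<pi> t" using Fs_agree[OF t1] agree_trans[OF a1 a2] by blast
qed

lemma lim_h0: "good k h0 \<Longrightarrow> agree k (lim h0) h0"
  using sq_h0 unfolding agree_def lim_def by blast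

lemma meets_iff: assumes m: "m \<in> idx_below k"
  shows "dcube k m \<inter> F_pi \<pi> \<noteq> {} \<longleftrightarrow> good k (cube_pt k m)"
proof
  assume "dcube k m \<inter> F_pi \<pi> \<noteq> {}"
  then obtain g where g: "g \<in> dcube k m" "g \<in> F_pi \<pi>" by blast
  have ag: "agree k g (cube_pt k m)" by (rule agree_cube_pt[OF m g(1)])
  show "good k (cube_pt k m)" unfolding good_def
  proof
    fix t assume t: "t \<in> {1..Tc k}"
    then have "2 * m_seq t < k" using Tc_iff[of t k] by simp
    then have "agree (Suc (2 * m_seq t)) g (cube_pt k m)" by (intro agree_mono[OF ag]) simp
    moreover have "g \<in> F_s \<pi> t" using g(2) t by (simp add: F_pi_def)
    ultimately show "cube_pt k m \<in> F_s \<pi> t" using Fs_agree t by simp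
  qed
next
  assume "good k (cube_pt k m)"
  then have "agree k (lim (cube_pt k m)) (cube_pt k m)" by (rule lim_h0)
  then have "lim (cube_pt k m) \<in> dcube k m" by (rule agree_dcube[OF m])
  then show "dcube k m \<inter> F_pi \<pi> \<noteq> {}" using lim_in_F by blast
qed

lemma good_agree: "agree k h h' \<Longrightarrow> good k h \<longleftrightarrow> good k h'"
proof -
  assume a: "agree k h h'"
  have "\<forall>t\<in>{1..Tc k}. h \<in> F_s \<pi> t \<longleftrightarrow> h' \<in> F_s \<pi> t"
  proof
    fix t assume t: "t \<in> {1..Tc k}"
    then have "2 * m_seq t < k" using Tc_iff[of t k] by simp
    then have "agree (Suc (2 * m_seq t)) h h'" by (intro agree_mono[OF a]) simp
    then show "h \<in> F_s \<pi> t \<longleftrightarrow> h' \<in> F_s \<pi> t" using Fs_agree t by simp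
  qed
  then show ?thesis by (simp add: good_def)
qed

lemma Rt_ch: assumes \<sigma>: "\<sigma> \<in> Sig" and k: "2 * m_seq t0 = k"
  shows "Rt t0 (cube_pt (Suc k) (ch p \<sigma>)) = sgp \<sigma>"
proof -
  have "Rt t0 (cube_pt (Suc k) (ch p \<sigma>)) = (\<Prod>l\<in>UNIV. walsh (2^k) (pt1 (Suc k) (2 * p l + \<sigma> l)))"
    unfolding Rt_def rad_def walshv_def k cube_pt_eq ch_def by simp
  also have "\<dots> = (\<Prod>l\<in>UNIV. sg (\<sigma> l = 1))"
  proof (rule prod.cong[OF refl])
    fix l
    have "\<sigma> l < 2" using \<sigma> by (simp add: Sig_def)
    then show "walsh (2^k) (pt1 (Suc k) (2 * p l + \<sigma> l)) = sg (\<sigma> l = 1)"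
      by (auto simp: walsh_pow2 pt1_def bit_0 less_2_cases_iff)
  qed
  finally show ?thesis by (simp add: sgp_def)
qed

lemma tauE_eq: assumes "m \<in> idx_below k"
  shows "tauE (F_pi \<pi>) k m = Pd (Tc k) (cube_pt k m) / 2^(k * card (UNIV :: 'd set))"
  using assms
proof (induction k arbitrary: m)
  case 0
  have "dcube 0 m = UNIV" by (simp add: dcube_def dint_def)
  then have "dcube 0 m \<inter> F_pi \<pi> \<noteq> {}" using lim_in_F by blast
  then show ?case by (simp add: Pd_def)
next
  case (Suc k)
  define d where "d = card (UNIV :: 'd set)"
  have d1: "1 \<le> d" using card_gt_0_iff[of "UNIV :: 'd set"] by (simp add: d_def)
  define p where "p = parent m"
  have p: "p \<in> idx_below k" unfolding p_def by (rule parent_idx[OF Suc.prems])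
  show ?case
  proof (cases "good (Suc k) (cube_pt (Suc k) m)")
    case False
    then have "dcube (Suc k) m \<inter> F_pi \<pi> = {}" using meets_iff[OF Suc.prems] by simp
    then show ?thesis using False by (simp del: Tc.simps add: Pd_Tc)
  next
    case True
    then have meet: "dcube (Suc k) m \<inter> F_pi \<pi> \<noteq> {}" using meets_iff[OF Suc.prems] by simp
    have agp: "agree k (cube_pt (Suc k) c) (cube_pt k p)" if c: "c \<in> children p" for c
    proof -
      obtain \<sigma> where s: "\<sigma> \<in> Sig" "c = ch p \<sigma>" using c children_eq[of p] by auto
      have "parent c = p" using parent_ch[OF s(1), of p] s(2) by simp
      then show ?thesis using agree_parent[of k c] by simp
    qed
    have gk: "good (Suc k) h \<Longrightarrow> good k h" for h
      unfolding good_def using Tc_mono[of k] by auto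
    have goodp: "good k (cube_pt k p)"
    proof -
      have "good k (cube_pt (Suc k) m)" using gk True by simp
      then show ?thesis using good_agree[OF agree_parent[of k m]] by (simp add: p_def)
    qed
    have IH: "tauE (F_pi \<pi>) k p = 2^Tc k / 2^(k * d)" using Suc.IH[OF p] goodp by (simp add: Pd_Tc d_def)
    have cset: "{c \<in> children p. dcube (Suc k) c \<inter> F_pi \<pi> \<noteq> {}} = ch p ` {\<sigma>\<in>Sig. good (Suc k) (cube_pt (Suc k) (ch p \<sigma>))}"
      unfolding children_eq using meets_iff ch_idx[OF p] by auto
    have ccard: "card {c \<in> children p. dcube (Suc k) c \<inter> F_pi \<pi> \<noteq> {}} = card {\<sigma>\<in>Sig. good (Suc k) (cube_pt (Suc k) (ch p \<sigma>))}"
      unfolding cset by (rule card_image) (rule inj_on_subset[OF ch_inj], auto)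
    have tau: "tauE (F_pi \<pi>) (Suc k) m = 2^Tc k / 2^(k * d) / card {\<sigma>\<in>Sig. good (Suc k) (cube_pt (Suc k) (ch p \<sigma>))}"
      using meet IH ccard by (simp add: p_def)
    show ?thesis
    proof (cases "\<exists>t\<ge>1. 2 * m_seq t = k")
      case False
      then have Tc: "Tc (Suc k) = Tc k" by simp
      have "good (Suc k) (cube_pt (Suc k) (ch p \<sigma>))" if "\<sigma> \<in> Sig" for \<sigma>
      proof -
        have "good k (cube_pt (Suc k) (ch p \<sigma>))"
          using good_agree[OF agp[of "ch p \<sigma>"]] goodp that children_eq by auto
        then show ?thesis unfolding good_def Tc[symmetric] .
      qed
      then have "{\<sigma>\<in>Sig. good (Suc k) (cube_pt (Suc k) (ch p \<sigma>))} = Sig" by auto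
      then have C: "card {\<sigma>\<in>Sig. good (Suc k) (cube_pt (Suc k) (ch p \<sigma>))} = 2^d"
        using card_Sig[where 'd='d] by (simp add: d_def)
      have "tauE (F_pi \<pi>) (Suc k) m = 2^Tc k / 2^(k * d) / 2^d" unfolding tau C by simp
      also have "\<dots> = 2^Tc (Suc k) / 2^(Suc k * d)" using Tc by (simp add: power_add)
      finally have X: "tauE (F_pi \<pi>) (Suc k) m = 2 ^ Tc (Suc k) / 2 ^ (Suc k * d)" .
      have P: "Pd (Tc (Suc k)) (cube_pt (Suc k) m) = 2^Tc (Suc k)" using True by (simp only: Pd_Tc if_True)
      show ?thesis unfolding P d_def[symmetric] by (rule X)
    next
      case True2: True
      then obtain t0 where t0: "1 \<le> t0" "2 * m_seq t0 = k" by blast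
      have Tc: "Tc (Suc k) = Suc (Tc k)" using True2 by simp
      have t0T: "t0 = Suc (Tc k)"
      proof -
        have "t0 \<le> Tc (Suc k)" using Tc_iff[OF t0(1), of "Suc k"] t0 by simp
        moreover have "\<not> t0 \<le> Tc k" using Tc_iff[OF t0(1), of k] t0 by simp
        ultimately show ?thesis using Tc by simp
      qed
      define v where "v = phi t0 (cube_pt k p)"
      have gs: "good (Suc k) (cube_pt (Suc k) (ch p \<sigma>)) \<longleftrightarrow> sgp \<sigma> = v" if \<sigma>: "\<sigma> \<in> Sig" for \<sigma>
      proof -
        have c: "ch p \<sigma> \<in> children p" using \<sigma> children_eq by auto
        have gk': "good k (cube_pt (Suc k) (ch p \<sigma>))" using good_agree[OF agp[OF c]] goodp by simp
        have "good (Suc k) (cube_pt (Suc k) (ch p \<sigma>)) \<longleftrightarrow> cube_pt (Suc k) (ch p \<sigma>) \<in> F_s \<pi> t0"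
          using gk' unfolding good_def Tc t0T by (auto simp: atLeastAtMostSuc_conv)
        also have "\<dots> \<longleftrightarrow> Rt t0 (cube_pt (Suc k) (ch p \<sigma>)) = phi t0 (cube_pt (Suc k) (ch p \<sigma>))"
          by (rule Fs_iff[OF t0(1)])
        also have "phi t0 (cube_pt (Suc k) (ch p \<sigma>)) = v"
          unfolding v_def using phi_agree[OF t0(1) ] agp[OF c] t0(2) by simp
        finally show ?thesis using Rt_ch[OF \<sigma> t0(2)] by simp
      qed
      have v: "v = 1 \<or> v = -1" unfolding v_def phi_def by (rule walshv_pm)
      have "{\<sigma>\<in>Sig. good (Suc k) (cube_pt (Suc k) (ch p \<sigma>))} = {\<sigma>\<in>Sig. sgp \<sigma> = v}" using gs by auto
      then have C: "card {\<sigma>\<in>Sig. good (Suc k) (cube_pt (Suc k) (ch p \<sigma>))} = 2^(d-1)"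
        using card_sgp[OF v, where 'd='d] by (simp add: d_def)
      have "tauE (F_pi \<pi>) (Suc k) m = 2^Tc k / 2^(k * d) / 2^(d - 1)" unfolding tau C by simp
      also have "\<dots> = 2^Tc (Suc k) / 2^(Suc k * d)"
      proof -
        have e: "Suc k * d = k * d + (d - 1) + 1" using d1 by simp
        have "(2::real)^(Suc k * d) = 2^(k*d) * 2^(d-1) * 2" by (simp only: e power_add power_one_right)
        then show ?thesis using Tc by simp
      qed
      finally have X: "tauE (F_pi \<pi>) (Suc k) m = 2 ^ Tc (Suc k) / 2 ^ (Suc k * d)" .
      have P: "Pd (Tc (Suc k)) (cube_pt (Suc k) m) = 2^Tc (Suc k)" using True by (simp only: Pd_Tc if_True)
      show ?thesis unfolding P d_def[symmetric] by (rule X)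
    qed
  qed
qed

end


context SP begin

definition acoef :: "'d idx \<Rightarrow> real" where
  "acoef = qm_coeff (qm_restrict (tauE (F_pi \<pi>)) k0 m0)"

lemma ind_cube_pt: "k0 \<le> k \<Longrightarrow> m \<in> idx_below k \<Longrightarrow>
   dcube k0 m0 \<inter> dcube k m \<noteq> {} \<longleftrightarrow> (\<forall>l. blk (cube_pt k m l) 0 k0 = m0 l)"
proof
  assume k: "k0 \<le> k" and m: "m \<in> idx_below k" and "dcube k0 m0 \<inter> dcube k m \<noteq> {}"
  then obtain g where g: "g \<in> dcube k0 m0" "g \<in> dcube k m" by blast
  have b: "blk (g l) 0 k0 = m0 l" for l using g(1) dcube_iff_blk[OF m0] by simp
  have "agree k g (cube_pt k m)" by (rule agree_cube_pt[OF m g(2)])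
  then have "blk (g l) 0 k0 = blk (cube_pt k m l) 0 k0" for l by (rule blk_agree[rotated]) (use k in simp)
  then show "\<forall>l. blk (cube_pt k m l) 0 k0 = m0 l" using b by simp
next
  assume k: "k0 \<le> k" and m: "m \<in> idx_below k" and "\<forall>l. blk (cube_pt k m l) 0 k0 = m0 l"
  then have "cube_pt k m \<in> dcube k0 m0" using dcube_iff_blk[OF m0] by simp
  then show "dcube k0 m0 \<inter> dcube k m \<noteq> {}" using cube_pt_dcube by blast
qed

lemma small_cube: assumes k: "k \<le> k0" and m: "m \<in> idx_below k"
  shows "dcube k0 m0 \<inter> dcube k m \<noteq> {} \<longleftrightarrow> m = (\<lambda>l. blk (cube_pt k0 m0 l) 0 k)"
proof
  assume "dcube k0 m0 \<inter> dcube k m \<noteq> {}"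
  then obtain g where g: "g \<in> dcube k0 m0" "g \<in> dcube k m" by blast
  have b: "blk (g l) 0 k = m l" for l using g(2) dcube_iff_blk[OF m] by simp
  have "agree k0 g (cube_pt k0 m0)" by (rule agree_cube_pt[OF m0 g(1)])
  then have "blk (g l) 0 k = blk (cube_pt k0 m0 l) 0 k" for l by (rule blk_agree[rotated]) (use k in simp)
  then show "m = (\<lambda>l. blk (cube_pt k0 m0 l) 0 k)" using b by auto
next
  assume e: "m = (\<lambda>l. blk (cube_pt k0 m0 l) 0 k)"
  have "cube_pt k0 m0 \<in> dcube k m" using dcube_iff_blk[OF m] e by simp
  then show "dcube k0 m0 \<inter> dcube k m \<noteq> {}" using cube_pt_dcube by blast
qed

lemma dcube_tau_big: assumes k: "k0 \<le> k" and m: "m \<in> idx_below k"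
  shows "qm_restrict (tauE (F_pi \<pi>)) k0 m0 k m = U (Tc k) (cube_pt k m) / 2^(k * card (UNIV :: 'd set))"
proof -
  have "ind (cube_pt k m) = of_bool (dcube k0 m0 \<inter> dcube k m \<noteq> {})"
    using ind_cube_pt[OF k m] by (simp add: ind_def)
  then show ?thesis unfolding qm_restrict_def U_def using k tauE_eq[OF m] by auto
qed

lemma Avg_big: assumes k: "k0 \<le> k" and n: "n \<in> idx_below k"
  shows "(\<Sum>m\<in>idx_below k. walsh_const k n m * qm_restrict (tauE (F_pi \<pi>)) k0 m0 k m)
     = Avg k (\<lambda>h. walshv n h * U (Tc k) h)"
proof -
  have "(\<Sum>m\<in>idx_below k. walsh_const k n m * qm_restrict (tauE (F_pi \<pi>)) k0 m0 k m)
      = (\<Sum>m\<in>idx_below k. (\<lambda>h. walshv n h * U (Tc k) h / 2^(k * card (UNIV :: 'd set))) (cube_pt k m))"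
    by (rule sum.cong[OF refl]) (simp add: dcube_tau_big[OF k] walsh_const_def)
  also have "\<dots> = (\<Sum>h\<in>PK k. walshv n h * U (Tc k) h / 2^(k * card (UNIV :: 'd set)))"
    by (rule sum_idx_PK)
  also have "\<dots> = Avg k (\<lambda>h. walshv n h * U (Tc k) h)"
    by (simp add: Avg_def sum_divide_distrib)
  finally show ?thesis .
qed

lemma U_Tc_dep: "k0 \<le> k \<Longrightarrow> dep (U (Tc k)) k"
proof (rule dep_U_gen)
  show "\<forall>t\<in>{1..Tc k}. Suc (2 * m_seq t) \<le> k" using Tc_iff by (auto simp: Suc_le_eq)
qed

lemma acoef_A: "\<exists>k'. k0 \<le> k' \<and> n \<in> idx_below k' \<and> acoef n = A (Tc k') n"
proof -
  define ks where "ks = (LEAST k. n \<in> idx_below k)"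
  have ex: "n \<in> idx_below (Kc 0 n)" by (rule n_Kc)
  have nks: "n \<in> idx_below ks" unfolding ks_def using ex by (rule LeastI)
  have ac: "acoef n = (\<Sum>m\<in>idx_below ks. walsh_const ks n m * qm_restrict (tauE (F_pi \<pi>)) k0 m0 ks m)"
    by (simp add: acoef_def qm_coeff_def ks_def Let_def)
  show ?thesis
  proof (cases "k0 \<le> ks")
    case True
    have "acoef n = Avg ks (\<lambda>h. walshv n h * U (Tc ks) h)" unfolding ac by (rule Avg_big[OF True nks])
    also have "\<dots> = A (Tc ks) n" by (rule A_eq[OF U_Tc_dep[OF True] nks])
    finally show ?thesis using True nks by blast
  next
    case False
    then have kk: "ks \<le> k0" by simp
    define mp where "mp = (\<lambda>l. blk (cube_pt k0 m0 l) 0 ks)"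
    have "acoef n = (\<Sum>m\<in>idx_below ks. if m = mp then walsh_const ks n mp * tauE (F_pi \<pi>) k0 m0 else 0)"
      unfolding ac
    proof (rule sum.cong[OF refl])
      fix m :: "'d idx" assume m: "m \<in> idx_below ks"
      show "walsh_const ks n m * qm_restrict (tauE (F_pi \<pi>)) k0 m0 ks m
          = (if m = mp then walsh_const ks n mp * tauE (F_pi \<pi>) k0 m0 else 0)"
        using small_cube[OF kk m] False by (auto simp: qm_restrict_def mp_def)
    qed
    also have "\<dots> = walsh_const ks n mp * tauE (F_pi \<pi>) k0 m0"
      by (simp add: mp_def blk_idx)
    also have "walsh_const ks n mp = walshv n (cube_pt k0 m0)"
      unfolding walsh_const_def mp_def
      by (rule walshv_agree[OF nks], rule agree_sym, rule agree_blk_pt)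
    also have "walshv n (cube_pt k0 m0) * tauE (F_pi \<pi>) k0 m0
        = (\<Sum>m\<in>idx_below k0. walsh_const k0 n m * qm_restrict (tauE (F_pi \<pi>)) k0 m0 k0 m)"
    proof -
      have "(\<Sum>m\<in>idx_below k0. walsh_const k0 n m * qm_restrict (tauE (F_pi \<pi>)) k0 m0 k0 m)
          = (\<Sum>m\<in>idx_below k0. if m = m0 then walsh_const k0 n m0 * tauE (F_pi \<pi>) k0 m0 else 0)"
      proof (rule sum.cong[OF refl])
        fix m :: "'d idx" assume m: "m \<in> idx_below k0"
        have "(\<lambda>l. blk (cube_pt k0 m0 l) 0 k0) = m0" using blk_cube_pt[OF m0] by auto
        then show "walsh_const k0 n m * qm_restrict (tauE (F_pi \<pi>)) k0 m0 k0 m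
          = (if m = m0 then walsh_const k0 n m0 * tauE (F_pi \<pi>) k0 m0 else 0)"
          using small_cube[OF order_refl m] by (auto simp: qm_restrict_def)
      qed
      also have "\<dots> = walsh_const k0 n m0 * tauE (F_pi \<pi>) k0 m0" using m0 by simp
      finally show ?thesis by (simp add: walsh_const_def)
    qed
    also have "\<dots> = Avg k0 (\<lambda>h. walshv n h * U (Tc k0) h)"
      by (rule Avg_big[OF order_refl idx_below_mono[OF nks kk]])
    also have "\<dots> = A (Tc k0) n" by (rule A_eq[OF U_Tc_dep[OF order_refl] idx_below_mono[OF nks kk]])
    finally show ?thesis using idx_below_mono[OF nks kk] by blast
  qed
qed

lemma acoef_eq: assumes nj: "n j < 2^(2 * m_seq (Suc s))" and k: "k0 \<le> 2 * m_seq (Suc s)"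
  shows "acoef n = A s n"
proof -
  obtain k' where k': "k0 \<le> k'" "n \<in> idx_below k'" "acoef n = A (Tc k') n" using acoef_A by blast
  define T where "T = max s (Tc k')"
  have c1: "A T n = A (Tc k') n"
  proof (rule A_chain)
    fix T' assume T': "Tc k' \<le> T'"
    have "\<not> Suc T' \<le> Tc k'" using T' by simp
    then have le: "k' \<le> 2 * m_seq (Suc T')" using Tc_iff[of "Suc T'" k'] by simp
    have "n j < 2^k'" using k'(2) by (simp add: idx_below_def)
    also have "(2::nat)^k' \<le> 2^(2 * m_seq (Suc T'))" using le by simp
    finally show "(\<exists>j. n j < 2 ^ (2 * m_seq (Suc T'))) \<and> k0 \<le> 2 * m_seq (Suc T')" using le k'(1) by auto
  qed (simp add: T_def)
  have c2: "A T n = A s n"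
  proof (rule A_chain)
    fix T' assume T': "s \<le> T'"
    then have le: "m_seq (Suc s) \<le> m_seq (Suc T')" by (intro ms_mono_le) auto
    have "n j < 2^(2 * m_seq (Suc s))" by (rule nj)
    also have "(2::nat)^(2 * m_seq (Suc s)) \<le> 2^(2 * m_seq (Suc T'))" using le by simp
    finally show "(\<exists>j. n j < 2 ^ (2 * m_seq (Suc T'))) \<and> k0 \<le> 2 * m_seq (Suc T')" using le k by auto
  qed (simp add: T_def)
  show ?thesis using c1 c2 k'(3) by simp
qed

end


definition qf :: "nat \<Rightarrow> nat \<Rightarrow> (nat \<Rightarrow> bool) \<Rightarrow> nat \<Rightarrow> nat \<Rightarrow> real" where
  "qf M R y p \<mu> = walsh (2^M * p) y * D (min (R - 2^M * p) (2^M)) (\<lambda>t. y t \<noteq> pt1 M \<mu> t) / 2^M"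

lemma qf_abs_le: "\<bar>qf M R y p \<mu>\<bar> \<le> 1"
proof -
  have "\<bar>D (min (R - 2^M * p) (2^M)) (\<lambda>t. y t \<noteq> pt1 M \<mu> t)\<bar> \<le> min (R - 2^M * p) (2^M)" by (rule D_le)
  also have "real (min (R - 2^M * p) (2^M)) \<le> 2^M" by simp
  finally show ?thesis by (simp add: qf_def abs_mult)
qed

lemma qf_early: assumes "t < J" "y t \<noteq> pt1 M \<mu> t" shows "\<bar>qf M R y p \<mu>\<bar> \<le> 2^J / 2^M"
proof -
  have "\<bar>D (min (R - 2^M * p) (2^M)) (\<lambda>t. y t \<noteq> pt1 M \<mu> t)\<bar> \<le> 2^Suc t" by (rule D_bound) (use assms in simp)
  also have "(2::real)^Suc t \<le> 2^J" using assms(1) by (intro power_increasing) auto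
  finally show ?thesis by (simp add: qf_def abs_mult divide_right_mono)
qed

lemma qf_nz:
  assumes mu: "\<mu> < 2^M" and R: "2^(2*M) \<le> R" and nz: "qf M R y (2^M + p) \<mu> \<noteq> 0"
  shows "\<mu> = blk y 0 M \<or> p = (R - 2^(2*M)) div 2^M"
proof -
  define P where "P = 2^M * (2^M + p)"
  define \<rho> where "\<rho> = min (R - P) (2^M)"
  have Dnz: "D \<rho> (\<lambda>t. y t \<noteq> pt1 M \<mu> t) \<noteq> 0" using nz by (simp add: qf_def P_def \<rho>_def)
  have P2: "P = 2^(2*M) + 2^M * p" by (simp add: P_def algebra_simps power_add[symmetric] mult_2)
  show ?thesis
  proof (cases "\<rho> = 2^M")
    case True
    have "D (2^M) (\<lambda>t. y t \<noteq> pt1 M \<mu> t) \<noteq> 0" using Dnz True by simp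
    then have "\<forall>t<M. \<not> (y t \<noteq> pt1 M \<mu> t)" unfolding D_pow by (simp split: if_splits)
    then have "\<forall>t<M. y t = bit \<mu> (M - 1 - t)" by (simp add: pt1_def)
    then have "blk y 0 M = \<mu>" using blk_eq_iff[OF mu] by simp
    then show ?thesis by simp
  next
    case False
    have "\<rho> \<noteq> 0"
    proof
      assume "\<rho> = 0" then show False using Dnz by simp
    qed
    then have "0 < R - P" "R - P < 2^M" using False by (auto simp: \<rho>_def min_def split: if_splits)
    then have "R - 2^(2*M) = 2^M * p + (R - P)" using P2 by simp
    then have "(R - 2^(2*M)) div 2^M = p" using \<open>R - P < 2^M\<close> by simp
    then show ?thesis by simp
  qed
qed

lemma sum_card_bound:
  fixes f :: "nat \<Rightarrow> real" and c :: real
  assumes "finite A" "\<And>x. x \<in> A \<Longrightarrow> f x \<noteq> 0 \<Longrightarrow> x \<in> B" "\<And>x. x \<in> A \<Longrightarrow> \<bar>f x\<bar> \<le> c" "finite B" "0 \<le> c"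
  shows "(\<Sum>x\<in>A. \<bar>f x\<bar>) \<le> card B * c"
proof -
  have "(\<Sum>x\<in>A. \<bar>f x\<bar>) = (\<Sum>x\<in>A \<inter> B. \<bar>f x\<bar>)"
    by (rule sum.mono_neutral_right) (use assms in auto)
  also have "\<dots> \<le> (\<Sum>x\<in>A \<inter> B. c)" by (rule sum_mono) (use assms in auto)
  also have "\<dots> = card (A \<inter> B) * c" by simp
  also have "\<dots> \<le> card B * c"
    by (rule mult_right_mono) (use assms in \<open>simp_all add: card_mono\<close>)
  finally show ?thesis .
qed

lemma card_Z: assumes "inj_on \<pi>' {..<(2::nat)^M}" shows "card {\<mu>\<in>{..<(2::nat)^M}. \<pi>' \<mu> = v} \<le> 1"
proof -
  have "\<forall>a\<in>{\<mu>\<in>{..<(2::nat)^M}. \<pi>' \<mu> = v}. \<forall>b\<in>{\<mu>\<in>{..<(2::nat)^M}. \<pi>' \<mu> = v}. a = b"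
    using assms by (auto simp: inj_on_def)
  then show ?thesis using card_le_Suc0_iff_eq[of "{\<mu>\<in>{..<(2::nat)^M}. \<pi>' \<mu> = v}"] by simp
qed

lemma qf_sum_bound:
  assumes R: "2^(2*M) \<le> R" and inj: "inj_on \<pi>' {..<(2::nat)^M}"
  shows "(\<Sum>\<mu><2^M. \<bar>qf M R y (2^M + \<pi>' \<mu>) \<mu>\<bar>) \<le> 2"
proof -
  define Z where "Z = {\<mu>\<in>{..<(2::nat)^M}. \<pi>' \<mu> = (R - 2^(2*M)) div 2^M}"
  have cZ: "card Z \<le> 1" unfolding Z_def by (rule card_Z[OF inj])
  have "(\<Sum>\<mu><2^M. \<bar>qf M R y (2^M + \<pi>' \<mu>) \<mu>\<bar>) \<le> card ({blk y 0 M} \<union> Z) * (1::real)"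
  proof (rule sum_card_bound)
    fix x assume "x \<in> {..<(2::nat)^M}" "qf M R y (2^M + \<pi>' x) x \<noteq> 0"
    then show "x \<in> {blk y 0 M} \<union> Z" using qf_nz[OF _ R] by (auto simp: Z_def)
  qed (auto simp: qf_abs_le Z_def)
  also have "card ({blk y 0 M} \<union> Z) \<le> card {blk y 0 M} + card Z" by (rule card_Un_le)
  finally show ?thesis using cZ by simp
qed

lemma qf_early_sum:
  assumes R: "2^(2*M) \<le> R" and inj: "inj_on \<pi>' {..<(2::nat)^M}" and J: "J \<le> M"
  shows "(\<Sum>\<mu><2^M. of_bool (\<exists>t<J. y t \<noteq> pt1 M \<mu> t) * \<bar>qf M R y (2^M + \<pi>' \<mu>) \<mu>\<bar>) \<le> 2^J / 2^M"
proof -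
  define Z where "Z = {\<mu>\<in>{..<(2::nat)^M}. \<pi>' \<mu> = (R - 2^(2*M)) div 2^M}"
  have cZ: "card Z \<le> 1" unfolding Z_def by (rule card_Z[OF inj])
  have "(\<Sum>\<mu><2^M. of_bool (\<exists>t<J. y t \<noteq> pt1 M \<mu> t) * \<bar>qf M R y (2^M + \<pi>' \<mu>) \<mu>\<bar>)
      = (\<Sum>\<mu><2^M. \<bar>of_bool (\<exists>t<J. y t \<noteq> pt1 M \<mu> t) * qf M R y (2^M + \<pi>' \<mu>) \<mu>\<bar>)"
    by (simp add: abs_mult)
  also have "\<dots> \<le> card Z * (2^J / 2^M)"
  proof (rule sum_card_bound)
    fix x assume x: "x \<in> {..<(2::nat)^M}" and nz: "of_bool (\<exists>t<J. y t \<noteq> pt1 M x t) * qf M R y (2^M + \<pi>' x) x \<noteq> 0"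
    then obtain t where t: "t < J" "y t \<noteq> pt1 M x t" by auto
    have "x \<noteq> blk y 0 M"
    proof
      assume "x = blk y 0 M"
      then have "y t = pt1 M x t" using blk_agree_pt1[of y M x t] t J by simp
      then show False using t by simp
    qed
    then show "x \<in> Z" using qf_nz[OF _ R, of x y "\<pi>' x"] x nz by (auto simp: Z_def)
  next
    fix x assume "x \<in> {..<(2::nat)^M}"
    show "\<bar>of_bool (\<exists>t<J. y t \<noteq> pt1 M x t) * qf M R y (2^M + \<pi>' x) x\<bar> \<le> 2^J / 2^M"
    proof (cases "\<exists>t<J. y t \<noteq> pt1 M x t")
      case True
      then obtain t where "t < J" "y t \<noteq> pt1 M x t" by blast
      then show ?thesis using qf_early True by simp
    next
      case False
      then have z: "of_bool (\<exists>t<J. y t \<noteq> pt1 M x t) = (0::real)" by (simp only: of_bool_eq(1))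
      show ?thesis unfolding z by simp
    qed
  qed (auto simp: Z_def)
  also have "\<dots> \<le> 1 * (2^J / 2^M)" using cZ by (intro mult_right_mono) auto
  finally show ?thesis by simp
qed


lemma prod_of_bool: "(\<Prod>l\<in>(UNIV::'d::finite set). (of_bool (P l) :: real)) = of_bool (\<forall>l. P l)"
proof (cases "\<forall>l. P l")
  case True then show ?thesis by simp
next
  case False
  then obtain l where "\<not> P l" by blast
  then have "(\<Prod>l\<in>(UNIV::'d set). (of_bool (P l) :: real)) = 0" by (intro prod_zero) auto
  then show ?thesis using False by simp
qed

lemma Avg_sum: "finite S \<Longrightarrow> Avg K (\<lambda>h. \<Sum>m\<in>S. f m h) = (\<Sum>m\<in>S. Avg K (f m))"
  by (simp add: Avg_def sum.swap[of _ S] sum_divide_distrib)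

lemma Avg_cmult: "Avg K (\<lambda>h. c * f h) = c * Avg K f"
  by (simp add: Avg_def sum_distrib_left)

context SP begin

definition cc :: "nat \<Rightarrow> 'd idx \<Rightarrow> real" where
  "cc r m = U r (cube_pt (m_seq (Suc r)) m)"

definition pp :: "nat \<Rightarrow> 'd \<Rightarrow> nat \<Rightarrow> nat" where
  "pp r l \<mu> = 2^(m_seq (Suc r)) + \<pi> (Suc r) l \<mu>"

lemma decomp:
  assumes r1: "1 \<le> r" and k: "k0 \<le> m_seq (Suc r)"
  shows "U (Suc r) h = (\<Sum>m\<in>idx_below (m_seq (Suc r)). cc r m *
      ((\<Prod>l\<in>UNIV. of_bool (blk (h l) 0 (m_seq (Suc r)) = m l))
     + (\<Prod>l\<in>UNIV. of_bool (blk (h l) 0 (m_seq (Suc r)) = m l) * walsh (2^(m_seq (Suc r)) * pp r l (m l)) (h l))))"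
proof -
  define M where "M = m_seq (Suc r)"
  define \<beta> where "\<beta> = (\<lambda>l. blk (h l) 0 M)"
  have b: "\<beta> \<in> idx_below M" unfolding \<beta>_def by (rule blk_idx)
  have MS: "M = 4 * m_seq r + 2" unfolding M_def by (rule ms_Suc[OF r1])
  have dU: "dep (U r) M" by (rule dep_U) (use k MS in \<open>auto simp: M_def\<close>)
  have Ur: "U r h = cc r \<beta>"
    unfolding cc_def M_def[symmetric] \<beta>_def using dU agree_blk_pt[of M h] by (simp add: dep_iff)
  have pl: "\<pi> (Suc r) l (\<beta> l) < 2^M" for l using pi_lt[of "Suc r" "\<beta> l" l] b by (simp add: M_def idx_below_def)
  have RP: "Rt (Suc r) h * phi (Suc r) h = (\<Prod>l\<in>UNIV. walsh (2^M * pp r l (\<beta> l)) (h l))"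
  proof -
    have "Rt (Suc r) h * phi (Suc r) h = (\<Prod>l\<in>UNIV. walsh (2^(2*M)) (h l) * walsh (2^M * \<pi> (Suc r) l (\<beta> l)) (h l))"
      unfolding Rt_def rad_def phi_def walshv_def prod.distrib M_def \<beta>_def ..
    also have "\<dots> = (\<Prod>l\<in>UNIV. walsh (2^M * pp r l (\<beta> l)) (h l))"
    proof (rule prod.cong[OF refl])
      fix l
      have lt: "2^M * \<pi> (Suc r) l (\<beta> l) < 2^(2*M)"
      proof -
        have "2^M * \<pi> (Suc r) l (\<beta> l) < 2^M * 2^M" using pl[of l] by simp
        then show ?thesis by (simp add: power_add[symmetric] mult_2)
      qed
      have e: "2^M * pp r l (\<beta> l) = 2^(2*M) * 1 + 2^M * \<pi> (Suc r) l (\<beta> l)"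
        by (simp add: pp_def M_def[symmetric] algebra_simps power_add[symmetric] mult_2)
      show "walsh (2^(2*M)) (h l) * walsh (2^M * \<pi> (Suc r) l (\<beta> l)) (h l) = walsh (2^M * pp r l (\<beta> l)) (h l)"
        unfolding e walsh_split[OF lt] by simp
    qed
    finally show ?thesis .
  qed
  have "(\<Sum>m\<in>idx_below M. cc r m *
      ((\<Prod>l\<in>UNIV. of_bool (blk (h l) 0 M = m l))
     + (\<Prod>l\<in>UNIV. of_bool (blk (h l) 0 M = m l) * walsh (2^M * pp r l (m l)) (h l))))
    = (\<Sum>m\<in>idx_below M. if m = \<beta> then cc r \<beta> * (1 + (\<Prod>l\<in>UNIV. walsh (2^M * pp r l (\<beta> l)) (h l))) else 0)"
  proof (rule sum.cong[OF refl])
    fix m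
    have "(\<Prod>l\<in>UNIV. of_bool (blk (h l) 0 M = m l) :: real) = of_bool (\<beta> = m)"
      unfolding prod_of_bool \<beta>_def by (simp add: fun_eq_iff)
    moreover have "(\<Prod>l\<in>UNIV. of_bool (blk (h l) 0 M = m l) * walsh (2^M * pp r l (m l)) (h l))
        = of_bool (\<beta> = m) * (\<Prod>l\<in>UNIV. walsh (2^M * pp r l (m l)) (h l))"
      unfolding prod.distrib prod_of_bool \<beta>_def by (simp add: fun_eq_iff)
    ultimately show "cc r m * ((\<Prod>l\<in>UNIV. of_bool (blk (h l) 0 M = m l))
     + (\<Prod>l\<in>UNIV. of_bool (blk (h l) 0 M = m l) * walsh (2^M * pp r l (m l)) (h l)))
      = (if m = \<beta> then cc r \<beta> * (1 + (\<Prod>l\<in>UNIV. walsh (2^M * pp r l (\<beta> l)) (h l))) else 0)"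
      by auto
  qed
  also have "\<dots> = cc r \<beta> * (1 + (\<Prod>l\<in>UNIV. walsh (2^M * pp r l (\<beta> l)) (h l)))"
    using b by simp
  also have "\<dots> = U (Suc r) h" unfolding U_Suc Ur[symmetric] RP ..
  finally show ?thesis unfolding M_def by simp
qed

lemma Avg_decomp:
  assumes r1: "1 \<le> r" and k: "k0 \<le> m_seq (Suc r)"
  shows "Avg K (\<lambda>h. walshv n h * U (Suc r) h) = (\<Sum>m\<in>idx_below (m_seq (Suc r)). cc r m *
      ((\<Prod>l\<in>UNIV. ee K (m_seq (Suc r)) (m l) 0 (n l)) + (\<Prod>l\<in>UNIV. ee K (m_seq (Suc r)) (m l) (pp r l (m l)) (n l))))"
proof -
  define M where "M = m_seq (Suc r)"
  define F0 where "F0 = (\<lambda>m h. \<Prod>l\<in>UNIV. walsh (n l) (h l) * of_bool (blk (h l) 0 M = m l) * walsh (2^M * 0) (h l))"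
  define F1 where "F1 = (\<lambda>m h. \<Prod>l\<in>UNIV. walsh (n l) (h l) * of_bool (blk (h l) 0 M = m l) * walsh (2^M * pp r l (m l)) (h l))"
  have e: "walshv n h * U (Suc r) h = (\<Sum>m\<in>idx_below M. cc r m * (F0 m h + F1 m h))" for h
  proof -
    have "walshv n h * U (Suc r) h = (\<Sum>m\<in>idx_below M. cc r m *
      (walshv n h * (\<Prod>l\<in>UNIV. of_bool (blk (h l) 0 M = m l))
     + walshv n h * (\<Prod>l\<in>UNIV. of_bool (blk (h l) 0 M = m l) * walsh (2^M * pp r l (m l)) (h l))))"
      unfolding decomp[OF r1 k, of h] M_def[symmetric] sum_distrib_left by (simp add: algebra_simps)
    also have "\<dots> = (\<Sum>m\<in>idx_below M. cc r m * (F0 m h + F1 m h))"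
      unfolding F0_def F1_def walshv_def prod.distrib[symmetric] by (simp add: mult.assoc)
    finally show ?thesis .
  qed
  have "Avg K (\<lambda>h. walshv n h * U (Suc r) h) = (\<Sum>m\<in>idx_below M. cc r m * (Avg K (F0 m) + Avg K (F1 m)))"
    unfolding e by (simp add: Avg_sum Avg_cmult Avg_add)
  also have "\<dots> = (\<Sum>m\<in>idx_below M. cc r m *
      ((\<Prod>l\<in>UNIV. ee K M (m l) 0 (n l)) + (\<Prod>l\<in>UNIV. ee K M (m l) (pp r l (m l)) (n l))))"
  proof (rule sum.cong[OF refl])
    fix m
    have a0: "Avg K (F0 m) = (\<Prod>l\<in>UNIV. ee K M (m l) 0 (n l))"
      unfolding F0_def ee_def
      using Ex_prod[of K "\<lambda>l x. walsh (n l) x * of_bool (blk x 0 M = m l) * walsh (2^M * 0) x"] by simp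
    have a1: "Avg K (F1 m) = (\<Prod>l\<in>UNIV. ee K M (m l) (pp r l (m l)) (n l))"
      unfolding F1_def ee_def
      using Ex_prod[of K "\<lambda>l x. walsh (n l) x * of_bool (blk x 0 M = m l) * walsh (2^M * pp r l (m l)) x"] by simp
    show "cc r m * (Avg K (F0 m) + Avg K (F1 m)) = cc r m *
      ((\<Prod>l\<in>UNIV. ee K M (m l) 0 (n l)) + (\<Prod>l\<in>UNIV. ee K M (m l) (pp r l (m l)) (n l)))"
      unfolding a0 a1 ..
  qed
  finally show ?thesis unfolding M_def .
qed

lemma qf_zero: "2^M \<le> R \<Longrightarrow> \<mu> < 2^M \<Longrightarrow> qf M R y 0 \<mu> = of_bool (blk y 0 M = \<mu>)"
proof -
  assume R: "2^M \<le> R" and mu: "\<mu> < 2^M"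
  have "min (R - 2^M * 0) (2^M) = 2^M" using R by simp
  then have "qf M R y 0 \<mu> = D (2^M) (\<lambda>t. y t \<noteq> pt1 M \<mu> t) / 2^M" by (simp add: qf_def)
  also have "\<dots> = of_bool (\<forall>t<M. y t = pt1 M \<mu> t)" by (simp add: D_pow)
  also have "(\<forall>t<M. y t = pt1 M \<mu> t) \<longleftrightarrow> blk y 0 M = \<mu>" using blk_eq_iff[OF mu] by (simp add: pt1_def)
  finally show ?thesis .
qed

lemma psum_decomp:
  assumes r1: "1 \<le> r" and k: "k0 \<le> m_seq (Suc r)"
    and K1: "2 * m_seq (Suc r) + 1 \<le> K" and NK: "\<forall>l. N l \<le> 2^K" and NM: "\<forall>l. 2^(m_seq (Suc r)) \<le> N l"
  shows "(\<Sum>n\<in>{n. \<forall>l. n l < N l}. Avg K (\<lambda>h. walshv n h * U (Suc r) h) * walshv n g)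
    = U r g + (\<Sum>m\<in>idx_below (m_seq (Suc r)). cc r m * (\<Prod>l\<in>UNIV. qf (m_seq (Suc r)) (N l) (g l) (pp r l (m l)) (m l)))"
proof -
  define M where "M = m_seq (Suc r)"
  have MK: "M \<le> K" using K1 by (simp add: M_def)
  have ppK: "pp r l \<mu> < 2^(K - M)" if "\<mu> < 2^M" for l \<mu>
  proof -
    have "\<pi> (Suc r) l \<mu> < 2^M" using pi_lt[of "Suc r" \<mu> l] that by (simp add: M_def)
    then have "pp r l \<mu> < 2^M + 2^M" by (simp add: pp_def M_def)
    also have "\<dots> = 2^Suc M" by simp
    also have "\<dots> \<le> 2^(K - M)" using K1 by (intro power_increasing) (auto simp: M_def)
    finally show ?thesis .
  qed
  have Q: "(\<Sum>j<N l. ee K M \<mu> p j * walsh j (g l)) = qf M (N l) (g l) p \<mu>"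
    if "\<mu> < 2^M" "p < 2^(K - M)" for l \<mu> p
    unfolding qf_def by (rule ee_sum[OF MK that(1) _ that(2)]) (use NK in auto)
  have "(\<Sum>n\<in>{n. \<forall>l. n l < N l}. Avg K (\<lambda>h. walshv n h * U (Suc r) h) * walshv n g)
    = (\<Sum>n\<in>{n. \<forall>l. n l < N l}. \<Sum>m\<in>idx_below M. cc r m *
      ((\<Prod>l\<in>UNIV. ee K M (m l) 0 (n l) * walsh (n l) (g l)) + (\<Prod>l\<in>UNIV. ee K M (m l) (pp r l (m l)) (n l) * walsh (n l) (g l))))"
  proof (rule sum.cong[OF refl])
    fix n :: "'d idx"
    show "Avg K (\<lambda>h. walshv n h * U (Suc r) h) * walshv n g = (\<Sum>m\<in>idx_below M. cc r m *
      ((\<Prod>l\<in>UNIV. ee K M (m l) 0 (n l) * walsh (n l) (g l)) + (\<Prod>l\<in>UNIV. ee K M (m l) (pp r l (m l)) (n l) * walsh (n l) (g l))))"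
      unfolding Avg_decomp[OF r1 k] M_def[symmetric]
      unfolding walshv_def sum_distrib_right prod.distrib by (simp add: algebra_simps)
  qed
  also have "\<dots> = (\<Sum>m\<in>idx_below M. cc r m *
      ((\<Sum>n\<in>{n. \<forall>l. n l < N l}. \<Prod>l\<in>UNIV. ee K M (m l) 0 (n l) * walsh (n l) (g l))
     + (\<Sum>n\<in>{n. \<forall>l. n l < N l}. \<Prod>l\<in>UNIV. ee K M (m l) (pp r l (m l)) (n l) * walsh (n l) (g l))))"
    by (subst sum.swap, rule sum.cong[OF refl]) (simp only: sum.distrib[symmetric] sum_distrib_left)
  also have "\<dots> = (\<Sum>m\<in>idx_below M. cc r m *
      ((\<Prod>l\<in>UNIV. qf M (N l) (g l) 0 (m l)) + (\<Prod>l\<in>UNIV. qf M (N l) (g l) (pp r l (m l)) (m l))))"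
  proof (rule sum.cong[OF refl])
    fix m :: "'d idx" assume m: "m \<in> idx_below M"
    then have ml: "m l < 2^M" for l by (simp add: idx_below_def)
    have z: "(0::nat) < 2^(K - M)" by simp
    show "cc r m * ((\<Sum>n\<in>{n. \<forall>l. n l < N l}. \<Prod>l\<in>UNIV. ee K M (m l) 0 (n l) * walsh (n l) (g l))
     + (\<Sum>n\<in>{n. \<forall>l. n l < N l}. \<Prod>l\<in>UNIV. ee K M (m l) (pp r l (m l)) (n l) * walsh (n l) (g l)))
      = cc r m * ((\<Prod>l\<in>UNIV. qf M (N l) (g l) 0 (m l)) + (\<Prod>l\<in>UNIV. qf M (N l) (g l) (pp r l (m l)) (m l)))"
      using sum_box_prod[where N=N and f="\<lambda>l j. ee K M (m l) 0 j * walsh j (g l)"]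
        sum_box_prod[where N=N and f="\<lambda>l j. ee K M (m l) (pp r l (m l)) j * walsh j (g l)"]
        Q[OF ml z] Q[OF ml ppK[OF ml]] by simp
  qed
  also have "\<dots> = (\<Sum>m\<in>idx_below M. cc r m * (\<Prod>l\<in>UNIV. of_bool (blk (g l) 0 M = m l)))
      + (\<Sum>m\<in>idx_below M. cc r m * (\<Prod>l\<in>UNIV. qf M (N l) (g l) (pp r l (m l)) (m l)))"
  proof -
    have "(\<Prod>l\<in>UNIV. qf M (N l) (g l) 0 (m l)) = (\<Prod>l\<in>UNIV. of_bool (blk (g l) 0 M = m l))"
      if "m \<in> idx_below M" for m :: "'d idx"
      using that NM qf_zero by (auto simp: idx_below_def M_def intro!: prod.cong)
    then show ?thesis by (simp add: distrib_left sum.distrib)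
  qed
  also have "(\<Sum>m\<in>idx_below M. cc r m * (\<Prod>l\<in>UNIV. of_bool (blk (g l) 0 M = m l))) = U r g"
  proof -
    define \<beta> where "\<beta> = (\<lambda>l. blk (g l) 0 M)"
    have b: "\<beta> \<in> idx_below M" unfolding \<beta>_def by (rule blk_idx)
    have MS: "M = 4 * m_seq r + 2" unfolding M_def by (rule ms_Suc[OF r1])
    have dU: "dep (U r) M" by (rule dep_U) (use k MS in \<open>auto simp: M_def\<close>)
    have Ur: "U r g = cc r \<beta>"
      unfolding cc_def M_def[symmetric] \<beta>_def using dU agree_blk_pt[of M g] by (simp add: dep_iff)
    have "(\<Sum>m\<in>idx_below M. cc r m * (\<Prod>l\<in>UNIV. of_bool (blk (g l) 0 M = m l)))
        = (\<Sum>m\<in>idx_below M. if m = \<beta> then cc r \<beta> else 0)"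
    proof (rule sum.cong[OF refl])
      fix m :: "'d idx"
      have "(\<Prod>l\<in>UNIV. of_bool (blk (g l) 0 M = m l) :: real) = of_bool (\<beta> = m)"
        unfolding prod_of_bool \<beta>_def by (simp add: fun_eq_iff)
      then show "cc r m * (\<Prod>l\<in>UNIV. of_bool (blk (g l) 0 M = m l)) = (if m = \<beta> then cc r \<beta> else 0)" by auto
    qed
    also have "\<dots> = cc r \<beta>" using b by simp
    finally show ?thesis using Ur by simp
  qed
  finally show ?thesis unfolding M_def .
qed

end


lemma prod_if_one: "(\<Prod>l\<in>(UNIV::'d::finite set). if l = l0 then (a::real) else b) = a * b^(card (UNIV::'d set) - 1)"
proof -
  have "(\<Prod>l\<in>(UNIV::'d set). if l = l0 then a else b) = a * (\<Prod>l\<in>UNIV - {l0}. if l = l0 then a else b)"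
    by (subst prod.remove[of _ l0]) auto
  also have "(\<Prod>l\<in>(UNIV::'d set) - {l0}. if l = l0 then a else b) = (\<Prod>l\<in>(UNIV::'d set) - {l0}. b)"
    by (rule prod.cong) auto
  also have "\<dots> = b^(card (UNIV::'d set) - 1)" by (simp add: card_Diff_singleton)
  finally show ?thesis .
qed

context SP begin

lemma rest_bound:
  assumes r1: "1 \<le> r" and k: "k0 \<le> Suc (2 * m_seq r)" and Ug: "U r g = 0"
    and NM: "\<forall>l. 2^(2 * m_seq (Suc r)) \<le> N l"
  shows "\<bar>\<Sum>m\<in>idx_below (m_seq (Suc r)). cc r m * (\<Prod>l\<in>UNIV. qf (m_seq (Suc r)) (N l) (g l) (pp r l (m l)) (m l))\<bar>
     \<le> 2^r * (card (UNIV::'d set) * ((2^Suc (2 * m_seq r) / 2^m_seq (Suc r)) * 2^(card (UNIV::'d set) - 1)))"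
proof -
  define M where "M = m_seq (Suc r)"
  define J where "J = Suc (2 * m_seq r)"
  define d where "d = card (UNIV::'d set)"
  have MS: "M = 4 * m_seq r + 2" unfolding M_def by (rule ms_Suc[OF r1])
  have JM: "J \<le> M" using MS by (simp add: J_def)
  define q where "q = (\<lambda>l \<mu>. qf M (N l) (g l) (pp r l \<mu>) \<mu>)"
  define E where "E = (\<lambda>l \<mu>. \<exists>t<J. g l t \<noteq> pt1 M \<mu> t)"
  have dU: "dep (U r) J" by (rule dep_U) (use k in \<open>auto simp: J_def\<close>)
  have step2: "\<bar>cc r m\<bar> * (\<Prod>l\<in>UNIV. \<bar>q l (m l)\<bar>) \<le> 2^r * (\<Sum>l0\<in>UNIV. of_bool (E l0 (m l0)) * (\<Prod>l\<in>UNIV. \<bar>q l (m l)\<bar>))"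
    for m
  proof (cases "cc r m = 0")
    case True
    then show ?thesis by (simp add: sum_nonneg prod_nonneg)
  next
    case False
    have "\<exists>l0. E l0 (m l0)"
    proof (rule ccontr)
      assume "\<not> (\<exists>l0. E l0 (m l0))"
      then have "agree J g (cube_pt M m)" unfolding agree_def E_def cube_pt_eq by auto
      then have "U r g = cc r m" using dU unfolding dep_iff cc_def M_def by blast
      then show False using Ug False by simp
    qed
    then obtain l0 where l0: "E l0 (m l0)" by blast
    have P0: "0 \<le> (\<Prod>l\<in>UNIV. \<bar>q l (m l)\<bar>)" by (simp add: prod_nonneg)
    have "(\<Prod>l\<in>UNIV. \<bar>q l (m l)\<bar>) = of_bool (E l0 (m l0)) * (\<Prod>l\<in>UNIV. \<bar>q l (m l)\<bar>)" using l0 by simp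
    also have "\<dots> \<le> (\<Sum>l0\<in>UNIV. of_bool (E l0 (m l0)) * (\<Prod>l\<in>UNIV. \<bar>q l (m l)\<bar>))"
      by (rule member_le_sum) (auto simp: prod_nonneg)
    finally have S: "(\<Prod>l\<in>UNIV. \<bar>q l (m l)\<bar>) \<le> (\<Sum>l0\<in>UNIV. of_bool (E l0 (m l0)) * (\<Prod>l\<in>UNIV. \<bar>q l (m l)\<bar>))" .
    have c: "\<bar>cc r m\<bar> \<le> 2^r" using U_nonneg U_le by (simp add: cc_def)
    show ?thesis by (rule mult_mono[OF c S]) (simp_all add: P0)
  qed
  have step4: "(\<Sum>m\<in>idx_below M. of_bool (E l0 (m l0)) * (\<Prod>l\<in>UNIV. \<bar>q l (m l)\<bar>))
      \<le> (2^J / 2^M) * 2^(d - 1)" for l0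
  proof -
    define f where "f = (\<lambda>l \<mu>. (if l = l0 then of_bool (E l \<mu>) else 1) * \<bar>q l \<mu>\<bar>)"
    have "(\<Sum>m\<in>idx_below M. of_bool (E l0 (m l0)) * (\<Prod>l\<in>UNIV. \<bar>q l (m l)\<bar>))
        = (\<Sum>m\<in>idx_below M. \<Prod>l\<in>UNIV. f l (m l))"
    proof (rule sum.cong[OF refl])
      fix m :: "'d idx"
      have "(\<Prod>l\<in>UNIV. f l (m l)) = (\<Prod>l\<in>UNIV. if l = l0 then of_bool (E l (m l)) else 1) * (\<Prod>l\<in>UNIV. \<bar>q l (m l)\<bar>)"
        unfolding f_def prod.distrib ..
      also have "(\<Prod>l\<in>UNIV. if l = l0 then of_bool (E l (m l)) else (1::real)) = of_bool (E l0 (m l0))"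
        by (simp add: prod.delta)
      finally show "of_bool (E l0 (m l0)) * (\<Prod>l\<in>UNIV. \<bar>q l (m l)\<bar>) = (\<Prod>l\<in>UNIV. f l (m l))" by simp
    qed
    also have "\<dots> = (\<Prod>l\<in>UNIV. \<Sum>\<mu><2^M. f l \<mu>)" by (rule sum_idx_prod)
    also have "\<dots> \<le> (\<Prod>l\<in>(UNIV::'d set). if l = l0 then 2^J / 2^M else 2)"
    proof (rule prod_mono, intro conjI)
      fix l
      show "0 \<le> (\<Sum>\<mu><2^M. f l \<mu>)" by (rule sum_nonneg) (simp add: f_def)
      have R: "2^(2*M) \<le> N l" using NM by (simp add: M_def)
      have inj: "inj_on (\<pi> (Suc r) l) {..<2^M}" using pi_inj[of "Suc r" l] by (simp add: M_def)
      show "(\<Sum>\<mu><2^M. f l \<mu>) \<le> (if l = l0 then 2^J / 2^M else 2)"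
      proof (cases "l = l0")
        case True
        then show ?thesis using qf_early_sum[OF R inj JM, of "g l"]
          by (simp add: f_def q_def E_def pp_def M_def)
      next
        case False
        then show ?thesis using qf_sum_bound[OF R inj, of "g l"]
          by (simp add: f_def q_def pp_def M_def)
      qed
    qed
    also have "\<dots> = (2^J / 2^M) * 2^(d - 1)" unfolding prod_if_one d_def ..
    finally show ?thesis .
  qed
  have "\<bar>\<Sum>m\<in>idx_below M. cc r m * (\<Prod>l\<in>UNIV. q l (m l))\<bar> \<le> (\<Sum>m\<in>idx_below M. \<bar>cc r m\<bar> * (\<Prod>l\<in>UNIV. \<bar>q l (m l)\<bar>))"
    by (rule order_trans[OF sum_abs]) (simp add: abs_mult abs_prod)
  also have "\<dots> \<le> (\<Sum>m\<in>idx_below M. 2^r * (\<Sum>l0\<in>UNIV. of_bool (E l0 (m l0)) * (\<Prod>l\<in>UNIV. \<bar>q l (m l)\<bar>)))"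
    by (rule sum_mono) (rule step2)
  also have "\<dots> = 2^r * (\<Sum>m\<in>idx_below M. \<Sum>l0\<in>UNIV. of_bool (E l0 (m l0)) * (\<Prod>l\<in>UNIV. \<bar>q l (m l)\<bar>))"
    by (simp only: sum_distrib_left)
  also have "\<dots> = 2^r * (\<Sum>l0\<in>UNIV. \<Sum>m\<in>idx_below M. of_bool (E l0 (m l0)) * (\<Prod>l\<in>UNIV. \<bar>q l (m l)\<bar>))"
    by (rule arg_cong[where f="\<lambda>x. 2^r * x"], rule sum.swap)
  also have "\<dots> \<le> 2^r * (\<Sum>l0\<in>(UNIV::'d set). (2^J / 2^M) * 2^(d - 1))"
    by (intro mult_left_mono sum_mono step4) simp_all
  also have "\<dots> = 2^r * (d * ((2^J / 2^M) * 2^(d - 1)))" by (simp add: d_def)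
  finally show ?thesis unfolding q_def M_def J_def d_def .
qed

end


definition BXs :: "'d set \<Rightarrow> nat \<Rightarrow> 'd idx set" where
  "BXs S B = {m. (\<forall>l\<in>S. m l < B) \<and> (\<forall>l. l \<notin> S \<longrightarrow> m l = 0)}"

lemma finite_BXs: "finite (BXs S B :: 'd::finite idx set)"
proof -
  have "BXs S B = PiE (UNIV :: 'd set) (\<lambda>l. if l \<in> S then {..<B} else {0})"
    by (auto simp: BXs_def PiE_UNIV_domain Pi_def split: if_splits)
  moreover have "finite (PiE (UNIV :: 'd set) (\<lambda>l. if l \<in> S then {..<B} else {0}))"
    by (rule finite_PiE) auto
  ultimately show ?thesis by simp
qed

lemma RX:
  fixes F :: "'d::finite idx \<Rightarrow> real"
  assumes j: "j \<notin> S"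
  shows "(\<Sum>k<A. \<Sum>m\<in>BXs S B. F (m(j := k)))
    = (\<Sum>m\<in>{m. m j < A \<and> (\<forall>l\<in>S. m l < B) \<and> (\<forall>l. l \<noteq> j \<and> l \<notin> S \<longrightarrow> m l = 0)}. F m)"
proof -
  have "(\<Sum>k<A. \<Sum>m\<in>BXs S B. F (m(j := k))) = (\<Sum>(k, m)\<in>{..<A} \<times> BXs S B. F (m(j := k)))"
    by (rule sum.cartesian_product)
  also have "\<dots> = (\<Sum>m\<in>{m. m j < A \<and> (\<forall>l\<in>S. m l < B) \<and> (\<forall>l. l \<noteq> j \<and> l \<notin> S \<longrightarrow> m l = 0)}. F m)"
    by (rule sum.reindex_bij_witness[where i = "\<lambda>m. (m j, m(j := 0))" and j = "\<lambda>(k, m). m(j := k)"])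
       (use j in \<open>auto simp: BXs_def fun_eq_iff\<close>)
  finally show ?thesis .
qed

lemma IS1:
  fixes f :: "'d::finite idx \<Rightarrow> real"
  assumes "distinct js" "\<And>n. (\<exists>l\<in>set js. B \<le> n l) \<Longrightarrow> f n = 0"
  shows "iter_sum js f (\<Sum>n\<in>BXs (set js) B. f n)"
  using assms
proof (induction js arbitrary: f)
  case Nil
  have "BXs (set []) B = {(\<lambda>_. 0) :: 'd idx}" by (auto simp: BXs_def)
  then show ?case by simp
next
  case (Cons j js)
  define T where "T = (\<lambda>k. \<Sum>n\<in>BXs (set js) B. f (n(j := k)))"
  have jn: "j \<notin> set js" and dj: "distinct js" using Cons.prems by auto
  have it: "iter_sum js (\<lambda>n. f (n(j := k))) (T k)" for k
    unfolding T_def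
  proof (rule Cons.IH[OF dj])
    fix n :: "'d idx" assume "\<exists>l\<in>set js. B \<le> n l"
    then obtain l where l: "l \<in> set js" "B \<le> n l" by blast
    then have "l \<noteq> j" using jn by auto
    then have "\<exists>l\<in>set (j # js). B \<le> (n(j := k)) l" using l by auto
    then show "f (n(j := k)) = 0" by (rule Cons.prems(2))
  qed
  have Tz: "T k = 0" if "k \<notin> {..<B}" for k
  proof -
    have "f (n(j := k)) = 0" for n using that by (intro Cons.prems(2)) auto
    then show ?thesis by (simp add: T_def)
  qed
  have "T sums (\<Sum>k\<in>{..<B}. T k)" by (rule sums_finite) (use Tz in auto)
  also have "(\<Sum>k\<in>{..<B}. T k) = (\<Sum>n\<in>BXs (set (j # js)) B. f n)"
  proof -
    have "(\<Sum>k\<in>{..<B}. T k) = (\<Sum>m\<in>{m. m j < B \<and> (\<forall>l\<in>set js. m l < B) \<and> (\<forall>l. l \<noteq> j \<and> l \<notin> set js \<longrightarrow> m l = 0)}. f m)"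
      unfolding T_def by (rule RX[OF jn])
    also have "{m. m j < B \<and> (\<forall>l\<in>set js. m l < B) \<and> (\<forall>l. l \<noteq> j \<and> l \<notin> set js \<longrightarrow> m l = 0)} = BXs (set (j # js)) B"
      by (auto simp: BXs_def)
    finally show ?thesis .
  qed
  finally show ?case using it by auto
qed

lemma IS2:
  fixes f :: "'d::finite idx \<Rightarrow> real"
  assumes H1: "\<And>j x. \<exists>B. \<forall>n. n j = x \<longrightarrow> (\<exists>l. B \<le> n l) \<longrightarrow> f n = 0"
    and H2: "\<And>\<epsilon>. \<epsilon> > 0 \<Longrightarrow> \<exists>K. \<forall>N. (\<forall>l. K \<le> N l) \<longrightarrow> \<bar>\<Sum>n\<in>{n. \<forall>l. n l < N l}. f n\<bar> < \<epsilon>"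
    and js: "distinct js" "set js = UNIV"
  shows "iter_sum js f 0"
proof (cases js)
  case Nil
  then show ?thesis using js by auto
next
  case (Cons j js')
  have jn: "j \<notin> set js'" and dj: "distinct js'" using js Cons by auto
  have sj: "set js' = UNIV - {j}" using js Cons jn by auto
  define B where "B = (\<lambda>k. SOME B. \<forall>n. n j = k \<longrightarrow> (\<exists>l. B \<le> n l) \<longrightarrow> f n = 0)"
  have Bp: "\<forall>n. n j = k \<longrightarrow> (\<exists>l. B k \<le> n l) \<longrightarrow> f n = 0" for k
    unfolding B_def by (rule someI_ex[OF H1])
  define T where "T = (\<lambda>k. \<Sum>n\<in>BXs (set js') (B k). f (n(j := k)))"
  have it: "iter_sum js' (\<lambda>n. f (n(j := k))) (T k)" for k
    unfolding T_def
  proof (rule IS1[OF dj])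
    fix n :: "'d idx" assume "\<exists>l\<in>set js'. B k \<le> n l"
    then obtain l where l: "l \<in> set js'" "B k \<le> n l" by blast
    then have "l \<noteq> j" using jn by auto
    then have "\<exists>l. B k \<le> (n(j := k)) l" using l by (intro exI[of _ l]) auto
    then show "f (n(j := k)) = 0" using Bp[of k] by auto
  qed
  have Tsum: "(\<Sum>k<A. T k) = (\<Sum>n\<in>{n. \<forall>l. n l < (if l = j then A else Bs)}. f n)"
    if Bs: "\<forall>k<A. B k \<le> Bs" for A Bs
  proof -
    have "(\<Sum>k<A. T k) = (\<Sum>k<A. \<Sum>n\<in>BXs (set js') Bs. f (n(j := k)))"
    proof (rule sum.cong[OF refl])
      fix k assume k: "k \<in> {..<A}"
      show "T k = (\<Sum>n\<in>BXs (set js') Bs. f (n(j := k)))"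
        unfolding T_def
      proof (rule sum.mono_neutral_left[OF finite_BXs])
        have "B k \<le> Bs" using Bs k by simp
        then show "BXs (set js') (B k) \<subseteq> BXs (set js') Bs" by (auto simp: BXs_def intro: less_le_trans)
        show "\<forall>i\<in>BXs (set js') Bs - BXs (set js') (B k). f (i(j := k)) = 0"
        proof
          fix i assume i: "i \<in> BXs (set js') Bs - BXs (set js') (B k)"
          then obtain l where l: "l \<in> set js'" "B k \<le> i l" by (auto simp: BXs_def not_less)
          then have "l \<noteq> j" using jn by auto
          then have "\<exists>l. B k \<le> (i(j := k)) l" using l by (intro exI[of _ l]) auto
          then show "f (i(j := k)) = 0" using Bp[of k] by auto
        qed
      qed
    qed
    also have "\<dots> = (\<Sum>m\<in>{m. m j < A \<and> (\<forall>l\<in>set js'. m l < Bs) \<and> (\<forall>l. l \<noteq> j \<and> l \<notin> set js' \<longrightarrow> m l = 0)}. f m)"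
      by (rule RX[OF jn])
    also have "{m. m j < A \<and> (\<forall>l\<in>set js'. m l < Bs) \<and> (\<forall>l. l \<noteq> j \<and> l \<notin> set js' \<longrightarrow> m l = 0)}
        = {n. \<forall>l. n l < (if l = j then A else Bs)}"
      using sj by auto
    finally show ?thesis .
  qed
  have "T sums 0"
    unfolding sums_def
  proof (rule LIMSEQ_I)
    fix r :: real assume r: "0 < r"
    obtain K where K: "\<forall>N. (\<forall>l. K \<le> N l) \<longrightarrow> \<bar>\<Sum>n\<in>{n. \<forall>l. n l < N l}. f n\<bar> < r" using H2[OF r] by blast
    show "\<exists>no. \<forall>n\<ge>no. norm ((\<Sum>k<n. T k) - 0) < r"
    proof (intro exI allI impI)
      fix A assume A: "K \<le> A"
      define Bs where "Bs = A + (\<Sum>k<A. B k)"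
      have Bs: "\<forall>k<A. B k \<le> Bs"
      proof (intro allI impI)
        fix k assume "k < A"
        then have "B k \<le> (\<Sum>k<A. B k)" by (intro member_le_sum) auto
        then show "B k \<le> Bs" by (simp add: Bs_def)
      qed
      have "\<forall>l. K \<le> (if l = j then A else Bs)" using A by (simp add: Bs_def)
      then show "norm ((\<Sum>k<A. T k) - 0) < r" using K Tsum[OF Bs] by simp
    qed
  qed
  then show ?thesis using Cons it by auto
qed


context SP begin

lemma U_eventually_zero: assumes g: "g \<notin> dcube k0 m0 \<inter> F_pi \<pi>" shows "\<exists>r1. \<forall>r\<ge>r1. U r g = 0"
proof (cases "g \<in> dcube k0 m0")
  case False
  then have "ind g = 0" using dcube_iff_blk[OF m0, of g] by (simp add: ind_def)
  then show ?thesis by (simp add: U_def)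
next
  case True
  then have "g \<notin> F_pi \<pi>" using g by blast
  then obtain t where t: "1 \<le> t" "g \<notin> F_s \<pi> t" unfolding F_pi_def by auto
  have "U r g = 0" if "t \<le> r" for r using t that by (auto simp: U_def Pd_def)
  then show ?thesis by blast
qed

lemma acoef_support: "\<exists>B. \<forall>n. n j = x \<longrightarrow> (\<exists>l. B \<le> n l) \<longrightarrow> acoef n = 0"
proof -
  define s where "s = x + k0 + 2"
  have ms: "s \<le> m_seq s" using ms_ge[of s] by (simp add: s_def)
  have ms1: "Suc s \<le> m_seq (Suc s)" using ms_ge[of "Suc s"] by (simp add: s_def)
  show ?thesis
  proof (intro exI allI impI)
    fix n :: "'d idx" assume nj: "n j = x" and "\<exists>l. 2^(Suc (2 * m_seq s)) \<le> n l"
    then obtain l where l: "2^(Suc (2 * m_seq s)) \<le> n l" by blast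
    have "x < 2^x" by (rule less_exp)
    also have "(2::nat)^x \<le> 2^(2 * m_seq (Suc s))"
    proof (rule power_increasing)
      have "x \<le> s" by (simp add: s_def)
      then show "x \<le> 2 * m_seq (Suc s)" using ms1 by linarith
    qed simp
    finally have "n j < 2^(2 * m_seq (Suc s))" using nj by simp
    moreover have "k0 \<le> s" by (simp add: s_def)
    ultimately have "acoef n = A s n" using ms1 by (intro acoef_eq[where j = j]) linarith+
    also have "A s n = 0"
    proof (rule A_zero_high[where T = s and l = l and n = n])
      show "k0 \<le> Suc (2 * m_seq s)" using ms \<open>k0 \<le> s\<close> by linarith
    qed (rule l)
    finally show "acoef n = 0" .
  qed
qed

lemma walshv_zero: "walshv (\<lambda>_. 0) h = 1" by (simp add: walshv_def)

lemma acoef_pos: assumes g0: "g0 \<in> dcube k0 m0" "g0 \<in> F_pi \<pi>" shows "acoef (\<lambda>_. 0) \<noteq> 0"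
proof -
  define s where "s = k0 + 2"
  have ms1: "Suc s \<le> m_seq (Suc s)" using ms_ge[of "Suc s"] by (simp add: s_def)
  have "acoef (\<lambda>_. 0) = A s (\<lambda>_. 0)"
  proof (rule acoef_eq[where j = undefined])
    show "k0 \<le> 2 * m_seq (Suc s)" using ms1 unfolding s_def by linarith
  qed simp
  define K where "K = Kc s (\<lambda>_. 0)"
  have dU: "dep (U s) K" by (rule dep_U) (auto simp: K_def Kc_def)
  define h0 where "h0 = cube_pt K (\<lambda>l. blk (g0 l) 0 K)"
  have h0P: "h0 \<in> PK K" unfolding h0_def using cube_pt_bij[of K] blk_idx by (metis bij_betwE)
  have "U s h0 = U s g0" using dU agree_blk_pt[of K g0] unfolding dep_iff h0_def by metis
  also have "U s g0 = 2^s"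
  proof -
    have "ind g0 = 1" using g0(1) dcube_iff_blk[OF m0, of g0] by (simp add: ind_def)
    moreover have "Pd s g0 = 2^s" using g0(2) by (auto simp: Pd_def F_pi_def)
    ultimately show ?thesis by (simp add: U_def)
  qed
  finally have pos: "0 < U s h0" by simp
  have "0 < sum (\<lambda>h. walshv (\<lambda>_. 0) h * U s h) (PK K)"
    by (rule sum_pos2[OF finite_PK h0P]) (use pos U_nonneg in \<open>simp_all add: walshv_zero\<close>)
  then have "0 < A s (\<lambda>_. 0)" by (simp add: A_def K_def Avg_def)
  then show ?thesis using \<open>acoef (\<lambda>_. 0) = A s (\<lambda>_. 0)\<close> by simp
qed

end


declare m_seq.simps(3)[simp del]

context SP begin

lemma conv_main: assumes ev: "\<exists>r1. \<forall>r\<ge>r1. U r g = 0" shows "conv_rect acoef g 0"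
  unfolding conv_rect_def
proof (intro allI impI)
  fix \<epsilon> :: real assume eps: "0 < \<epsilon>"
  obtain r1 where r1: "\<forall>r\<ge>r1. U r g = 0" using ev by blast
  define d where "d = card (UNIV :: 'd set)"
  define C :: real where "C = d * 2^(d - 1)"
  have C0: "0 \<le> C" by (simp add: C_def)
  obtain n0 :: nat where n0: "C / \<epsilon> < n0" using reals_Archimedean2 by blast
  define R0 where "R0 = r1 + k0 + n0 + 2"
  define K0 where "K0 = 2^(2 * m_seq (Suc R0)) + (1::nat)"
  show "\<exists>K. \<forall>N. (\<forall>l. K \<le> N l) \<longrightarrow> \<bar>psum acoef N g - 0\<bar> < \<epsilon>"
  proof (intro exI allI impI)
    fix N :: "'d idx" assume NK0: "\<forall>l. K0 \<le> N l"
    define x where "x = Min (range N)"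
    have xin: "x \<in> range N" unfolding x_def by (rule Min_in) auto
    then obtain l0 where l0: "N l0 = x" by auto
    have xle: "x \<le> N l" for l unfolding x_def by (rule Min_le) auto
    have xK0: "K0 \<le> x" using NK0 l0 by metis
    define P where "P = (\<lambda>t. x \<le> 2^(2 * m_seq (Suc (Suc t))))"
    have Px: "P x"
    proof -
      have "x < 2^x" by (rule less_exp)
      also have "(2::nat)^x \<le> 2^(2 * m_seq (Suc (Suc x)))"
        using ms_ge'[of x] by (intro power_increasing) auto
      finally show ?thesis by (simp add: P_def)
    qed
    define r where "r = (LEAST t. P t)"
    have Pr: "P r" unfolding r_def by (rule LeastI[of P, OF Px])
    have nPr: "\<not> P t" if "t < r" for t using not_less_Least[of t P] that by (simp add: r_def)
    have rR0: "R0 \<le> r"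
    proof (rule ccontr)
      assume "\<not> R0 \<le> r"
      then have "m_seq (Suc (Suc r)) \<le> m_seq (Suc R0)" by (intro ms_mono_le) auto
      then have pw: "(2::nat)^(2 * m_seq (Suc (Suc r))) \<le> 2^(2 * m_seq (Suc R0))"
        by (intro power_increasing) auto
      have "x \<le> 2^(2 * m_seq (Suc (Suc r)))" using Pr by (simp add: P_def)
      then show False using xK0 pw unfolding K0_def by linarith
    qed
    then obtain r' where r': "r = Suc r'" by (cases r) (auto simp: R0_def)
    have low: "2^(2 * m_seq (Suc r)) < x" using nPr[of r'] r' by (simp add: P_def)
    define M where "M = m_seq (Suc r)"
    have r1': "1 \<le> r" and r2: "2 \<le> r" using rR0 by (auto simp: R0_def)
    have mr: "r \<le> m_seq r" by (rule ms_ge[OF r2])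
    have MS: "M = 4 * m_seq r + 2" unfolding M_def by (rule ms_Suc[OF r1'])
    have kr: "k0 \<le> r" using rR0 by (simp add: R0_def)
    have NM: "\<forall>l. 2^(2 * M) \<le> N l" using low xle by (auto simp: M_def intro: less_imp_le order_trans)
    define K where "K = k0 + 2 * M + 2 + (\<Sum>l\<in>UNIV. N l)"
    have NlK: "N l \<le> K" for l
    proof -
      have "N l \<le> (\<Sum>l\<in>UNIV. N l)" by (rule member_le_sum) auto
      then show ?thesis by (simp add: K_def)
    qed
    have NK: "N l \<le> 2^K" for l using NlK[of l] less_exp[of K] by linarith
    have dU: "dep (U (Suc r)) K" by (rule dep_U) (auto simp: K_def M_def)
    have mss: "Suc (Suc r) \<le> m_seq (Suc (Suc r))" by (rule ms_ge) simp
    have ac: "acoef n = Avg K (\<lambda>h. walshv n h * U (Suc r) h)" if n: "n \<in> {n. \<forall>l. n l < N l}" for n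
    proof -
      have "n l0 < 2^(2 * m_seq (Suc (Suc r)))" using n l0 Pr by (auto simp: P_def intro: less_le_trans)
      then have "acoef n = A (Suc r) n" by (rule acoef_eq) (use mss kr in linarith)
      also have "n \<in> idx_below K"
      proof -
        have "n l < 2^K" for l using n NK[of l] by (auto intro: less_le_trans)
        then show ?thesis by (simp add: idx_below_def)
      qed
      then have "A (Suc r) n = Avg K (\<lambda>h. walshv n h * U (Suc r) h)" by (rule A_eq[OF dU, symmetric])
      finally show ?thesis .
    qed
    have "psum acoef N g = (\<Sum>n\<in>{n. \<forall>l. n l < N l}. Avg K (\<lambda>h. walshv n h * U (Suc r) h) * walshv n g)"
      unfolding psum_def by (rule sum.cong[OF refl]) (simp add: ac)
    also have "\<dots> = U r g + (\<Sum>m\<in>idx_below M. cc r m * (\<Prod>l\<in>UNIV. qf M (N l) (g l) (pp r l (m l)) (m l)))"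
      unfolding M_def
    proof (rule psum_decomp[OF r1'])
      show "k0 \<le> m_seq (Suc r)" using MS kr mr by (simp add: M_def)
      show "2 * m_seq (Suc r) + 1 \<le> K" by (simp add: K_def M_def)
      show "\<forall>l. N l \<le> 2^K" using NK by blast
      have pm: "(2::nat)^(m_seq (Suc r)) \<le> 2^(2 * m_seq (Suc r))" by (intro power_increasing) auto
      show "\<forall>l. 2^(m_seq (Suc r)) \<le> N l"
      proof
        fix l
        have "2^(2 * m_seq (Suc r)) \<le> N l" using NM by (simp add: M_def)
        then show "2^(m_seq (Suc r)) \<le> N l" using pm by linarith
      qed
    qed
    also have "U r g = 0" using r1 rR0 by (simp add: R0_def)
    finally have ps: "psum acoef N g = (\<Sum>m\<in>idx_below M. cc r m * (\<Prod>l\<in>UNIV. qf M (N l) (g l) (pp r l (m l)) (m l)))" by simp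
    have bnd: "\<bar>psum acoef N g\<bar> \<le> 2^r * (d * ((2^Suc (2 * m_seq r) / 2^M) * 2^(d - 1)))"
      unfolding ps M_def d_def
    proof (rule rest_bound[OF r1'])
      show "k0 \<le> Suc (2 * m_seq r)" using kr mr by linarith
      show "U r g = 0" using r1 rR0 by (simp add: R0_def)
      show "\<forall>l. 2^(2 * m_seq (Suc r)) \<le> N l" using NM by (simp add: M_def)
    qed
    have e1: "(2::real)^Suc (2 * m_seq r) / 2^M = 1 / 2^(2 * m_seq r + 1)"
    proof -
      have "M = Suc (2 * m_seq r) + (2 * m_seq r + 1)" using MS by simp
      then have "(2::real)^M = 2^Suc (2 * m_seq r) * 2^(2 * m_seq r + 1)" by (simp add: power_add[symmetric])
      then show ?thesis by simp
    qed
    have e2: "(2::real)^r / 2^(2 * m_seq r + 1) \<le> 1 / 2^r"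
    proof -
      have "(2::real)^(r + r) \<le> 2^(2 * m_seq r + 1)" using mr by (intro power_increasing) auto
      then have "(2::real)^r * 2^r \<le> 2^(2 * m_seq r + 1)" by (simp add: power_add)
      then show ?thesis by (simp add: field_simps)
    qed
    have "2^r * (d * ((2^Suc (2 * m_seq r) / 2^M) * 2^(d - 1))) = C * ((2::real)^r / 2^(2 * m_seq r + 1))"
      unfolding e1 C_def by simp
    also have "\<dots> \<le> C * (1 / 2^r)" by (rule mult_left_mono[OF e2 C0])
    also have "\<dots> < \<epsilon>"
    proof -
      have h1: "real n0 \<le> real r" using rR0 by (simp add: R0_def)
      have h2: "real r < (2::real)^r" by (metis less_exp of_nat_less_numeral_power_cancel_iff of_nat_numeral)
      have "C / \<epsilon> < 2^r" using n0 h1 h2 by linarith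
      then have "C < \<epsilon> * 2^r" using eps by (simp add: field_simps)
      then show ?thesis by (simp add: field_simps)
    qed
    finally show "\<bar>psum acoef N g - 0\<bar> < \<epsilon>" using bnd by simp
  qed
qed

end


lemma rect_cube: "conv_rect a g 0 \<Longrightarrow> conv_cube a g 0"
  unfolding conv_rect_def conv_cube_def
proof -
  assume h: "\<forall>\<epsilon>>0. \<exists>K. \<forall>N. (\<forall>l. K \<le> N l) \<longrightarrow> \<bar>psum a N g - 0\<bar> < \<epsilon>"
  show "(\<lambda>N. psum a (\<lambda>_. N) g) \<longlonglongrightarrow> 0"
  proof (rule LIMSEQ_I)
    fix r :: real assume "0 < r"
    then obtain K where K: "\<forall>N. (\<forall>l. K \<le> N l) \<longrightarrow> \<bar>psum a N g - 0\<bar> < r" using h by blast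
    show "\<exists>no. \<forall>n\<ge>no. norm (psum a (\<lambda>_. n) g - 0) < r"
      using K by (intro exI[of _ K]) auto
  qed
qed

theorem theorem6:
  fixes \<pi> :: "nat \<Rightarrow> 'd::finite \<Rightarrow> nat \<Rightarrow> nat"
    and G :: "'d pt set"
  assumes "card (UNIV :: 'd set) \<ge> 2"
    and "\<forall>s\<ge>1. \<forall>l. bij_betw (\<pi> s l) {..<2 ^ m_seq s} {..<2 ^ m_seq s}"
    and "open_dyadic G"
    and "G \<inter> F_pi \<pi> \<noteq> {}"
  shows "M_set conv_rect (G \<inter> F_pi \<pi>)
       \<and> M_set conv_cube (G \<inter> F_pi \<pi>)
       \<and> (\<forall>js. distinct js \<and> set js = UNIV \<longrightarrow> M_set (conv_rep js) (G \<inter> F_pi \<pi>))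
       \<and> (\<exists>s0\<ge>1. \<exists>m0\<in>idx_below (m_seq s0). dcube (m_seq s0) m0 \<subseteq> G \<and>
            (let a = qm_coeff (qm_restrict (tauE (F_pi \<pi>)) (m_seq s0) m0)
             in realizes conv_rect a (G \<inter> F_pi \<pi>)
              \<and> realizes conv_cube a (G \<inter> F_pi \<pi>)
              \<and> (\<forall>js. distinct js \<and> set js = UNIV \<longrightarrow> realizes (conv_rep js) a (G \<inter> F_pi \<pi>))))"
proof -
  obtain g0 where g0: "g0 \<in> G" "g0 \<in> F_pi \<pi>" using assms(4) by blast
  obtain k m where km: "m \<in> idx_below k" "g0 \<in> dcube k m" "dcube k m \<subseteq> G"
    using assms(3) g0(1) unfolding open_dyadic_def by blast
  define s0 where "s0 = k + 2"
  define k0 where "k0 = m_seq s0"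
  have s01: "1 \<le> s0" by (simp add: s0_def)
  have kk0: "k \<le> k0" using ms_ge[of s0] by (simp add: s0_def k0_def)
  define m0 where "m0 = (\<lambda>l. blk (g0 l) 0 k0)"
  have m0: "m0 \<in> idx_below k0" unfolding m0_def by (rule blk_idx)
  have ag0: "agree k0 g0 (cube_pt k0 m0)" unfolding m0_def by (rule agree_blk_pt)
  have g0c: "g0 \<in> dcube k0 m0" by (rule agree_dcube[OF m0 ag0])
  have sub: "dcube k0 m0 \<subseteq> G"
  proof
    fix h assume h: "h \<in> dcube k0 m0"
    have "agree k0 h (cube_pt k0 m0)" by (rule agree_cube_pt[OF m0 h])
    then have "agree k0 h g0" using ag0 agree_sym agree_trans by blast
    then have "agree k h g0" using kk0 agree_mono by blast
    moreover have "agree k g0 (cube_pt k m)" by (rule agree_cube_pt[OF km(1,2)])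
    ultimately have "agree k h (cube_pt k m)" using agree_trans by blast
    then have "h \<in> dcube k m" by (rule agree_dcube[OF km(1)])
    then show "h \<in> G" using km(3) by blast
  qed
  have spa: "SP \<pi> k0 m0" by unfold_locales (use assms(2) m0 in auto)
  interpret S: SP \<pi> k0 m0 by (rule spa)
  have aeq: "qm_coeff (qm_restrict (tauE (F_pi \<pi>)) (m_seq s0) m0) = S.acoef"
    using spa unfolding k0_def by (rule SP.acoef_def[symmetric])
  have nz: "\<exists>n. S.acoef n \<noteq> 0" using S.acoef_pos[OF g0c g0(2)] by blast
  have rect: "conv_rect S.acoef g 0" if "g \<notin> G \<inter> F_pi \<pi>" for g
  proof (rule S.conv_main, rule S.U_eventually_zero)
    show "g \<notin> dcube k0 m0 \<inter> F_pi \<pi>" using that sub by blast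
  qed
  have cube: "conv_cube S.acoef g 0" if "g \<notin> G \<inter> F_pi \<pi>" for g by (rule rect_cube[OF rect[OF that]])
  have rep: "conv_rep js S.acoef g 0" if "g \<notin> G \<inter> F_pi \<pi>" "distinct js" "set js = UNIV" for g js
    unfolding conv_rep_def
  proof (rule IS2[OF _ _ that(2,3)])
    fix j x
    obtain B where B: "\<forall>n. n j = x \<longrightarrow> (\<exists>l. B \<le> n l) \<longrightarrow> S.acoef n = 0" using S.acoef_support by blast
    show "\<exists>B. \<forall>n. n j = x \<longrightarrow> (\<exists>l. B \<le> n l) \<longrightarrow> S.acoef n * walshv n g = 0"
      using B by (intro exI[of _ B]) auto
  next
    fix \<epsilon> :: real assume "0 < \<epsilon>"
    then show "\<exists>K. \<forall>N. (\<forall>l. K \<le> N l) \<longrightarrow> \<bar>\<Sum>n\<in>{n. \<forall>l. n l < N l}. S.acoef n * walshv n g\<bar> < \<epsilon>"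
      using rect[OF that(1)] unfolding conv_rect_def psum_def by simp
  qed
  have R1: "realizes conv_rect S.acoef (G \<inter> F_pi \<pi>)" using nz rect by (simp add: realizes_def)
  have R2: "realizes conv_cube S.acoef (G \<inter> F_pi \<pi>)" using nz cube by (simp add: realizes_def)
  have R3: "\<forall>js. distinct js \<and> set js = UNIV \<longrightarrow> realizes (conv_rep js) S.acoef (G \<inter> F_pi \<pi>)"
    using nz rep by (simp add: realizes_def)
  have ex: "\<exists>s0\<ge>1. \<exists>m0\<in>idx_below (m_seq s0). dcube (m_seq s0) m0 \<subseteq> G \<and>
            (let a = qm_coeff (qm_restrict (tauE (F_pi \<pi>)) (m_seq s0) m0)
             in realizes conv_rect a (G \<inter> F_pi \<pi>)
              \<and> realizes conv_cube a (G \<inter> F_pi \<pi>)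
              \<and> (\<forall>js. distinct js \<and> set js = UNIV \<longrightarrow> realizes (conv_rep js) a (G \<inter> F_pi \<pi>)))"
    unfolding Let_def
  proof (intro exI[of _ s0] conjI bexI[of _ m0])
    show "1 \<le> s0" by (rule s01)
    show "m0 \<in> idx_below (m_seq s0)" using m0 by (simp add: k0_def)
    show "dcube (m_seq s0) m0 \<subseteq> G" using sub by (simp add: k0_def)
    show "realizes conv_rect (qm_coeff (qm_restrict (tauE (F_pi \<pi>)) (m_seq s0) m0)) (G \<inter> F_pi \<pi>)"
      unfolding aeq by (rule R1)
    show "realizes conv_cube (qm_coeff (qm_restrict (tauE (F_pi \<pi>)) (m_seq s0) m0)) (G \<inter> F_pi \<pi>)"
      unfolding aeq by (rule R2)
    show "\<forall>js. distinct js \<and> set js = UNIV \<longrightarrow> realizes (conv_rep js) (qm_coeff (qm_restrict (tauE (F_pi \<pi>)) (m_seq s0) m0)) (G \<inter> F_pi \<pi>)"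
      unfolding aeq by (rule R3)
  qed
  have M1: "M_set conv_rect (G \<inter> F_pi \<pi>)" unfolding M_set_def using R1 by blast
  have M2: "M_set conv_cube (G \<inter> F_pi \<pi>)" unfolding M_set_def using R2 by blast
  have M3: "\<forall>js. distinct js \<and> set js = UNIV \<longrightarrow> M_set (conv_rep js) (G \<inter> F_pi \<pi>)"
    unfolding M_set_def using R3 by blast
  show ?thesis using M1 M2 M3 ex by (intro conjI)
qed


end
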